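(* Let $d\ge 4$ be even, $n=\frac{d^2}{2}$, and consider the $[[d^2,2,d]]$ generalized bicycle code defined by $a(x)=1+x$, $b(x)=1+x^{d+1}$. If all syndrome extractions are performed using the RL pattern, the effective distance of the code is $d$.
   Context: $R_n=\mathbb{F}_2[x]/\langle x^n-1\rangle$, vectors of $\mathbb{F}_2^{2n}$ are pairs $(u,v)$ of elements of $R_n$ (left half, right half), weight = number of nonzero coefficients. Code spaces: $C_2=\{(c(1+x),c(1+x^{d+1}))\}$ (X-stabilizers), $C_1=\{(u,v):u(1+x^{d+1})+v(1+x)=0\}$, $C_2'=\{(c(1+x^{-(d+1)}),c(1+x^{-1}))\}$ (Z-stabilizers), $C_1'=\{(u,v):u(1+x^{-1})+v(1+x^{-(d+1)})=0\}$, $x^{-1}=x^{n-1}$; undetectable X- (resp. Z-) logical errors are elements of $C_1\setminus C_2$ (resp. $C_1'\setminus C_2'$). Each check $x^i(1+x,1+x^{d+1})$ and $x^i(1+x^{-(d+1)},1+x^{-1})$ is measured with one ancilla via four CNOTs. In the RL pattern the ancilla first interacts with the check's two right-half qubits and then with its two left-half qubits, so a single ancilla fault between the two halves propagates to errors of the check's type on its two left-half qubits, i.e. $(x^i(1+x),0)$ for X-checks and $(x^i(1+x^{-(d+1)}),0)$ for Z-checks; any other single ancilla fault is equivalent to at most one data-qubit error. The effective distance is the minimum of $\mathrm{wt}(j)+\mathrm{wt}(u)+\mathrm{wt}(v)$ over $j,u,v\in R_n$ with $(u+j(x)(1+x),v)\in C_1\setminus C_2$ or $(u+j(x)(1+x^{-(d+1)}),v)\in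 C_1'\setminus C_2'$. *)

theory Defs
  imports Main
begin

text \<open>Elements of R_n = F_2[x]/(x^n - 1) are represented by their supports:
  the set of exponents in {0..<n} having coefficient 1.\<close>

definition Rn :: "nat \<Rightarrow> nat set set" where
  "Rn n = Pow {0..<n}"

definition wt :: "nat set \<Rightarrow> nat" where
  "wt p = card p"

definition radd :: "nat set \<Rightarrow> nat set \<Rightarrow> nat set" where
  "radd p q = (p - q) \<union> (q - p)"

definition rmul :: "nat \<Rightarrow> nat set \<Rightarrow> nat set \<Rightarrow> nat set" where
  "rmul n p q = {k. k < n \<and> odd (card {(i, j). i \<in> p \<and> j \<in> q \<and> (i + j) mod n = k})}"

definition xpow :: "nat \<Rightarrow> nat \<Rightarrow> nat set" where
  "xpow n k = {k mod n}"

definition xinvpow :: "nat \<Rightarrow> nat \<Rightarrow> nat set" where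
  "xinvpow n k = {(n - k mod n) mod n}"

definition rone :: "nat \<Rightarrow> nat set" where
  "rone n = xpow n 0"

text \<open>X-stabilizer and X-logical spaces.\<close>
definition C2 :: "nat \<Rightarrow> nat \<Rightarrow> (nat set \<times> nat set) set" where
  "C2 n d = {(rmul n c (radd (rone n) (xpow n 1)), rmul n c (radd (rone n) (xpow n (d + 1)))) | c. c \<in> Rn n}"

definition C1 :: "nat \<Rightarrow> nat \<Rightarrow> (nat set \<times> nat set) set" where
  "C1 n d = {(u, v). u \<in> Rn n \<and> v \<in> Rn n \<and>
     radd (rmul n u (radd (rone n) (xpow n (d + 1)))) (rmul n v (radd (rone n) (xpow n 1))) = {}}"

text \<open>Z-stabilizer and Z-logical spaces.\<close>
definition C2' :: "nat \<Rightarrow> nat \<Rightarrow> (nat set \<times> nat set) set" where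
  "C2' n d = {(rmul n c (radd (rone n) (xinvpow n (d + 1))), rmul n c (radd (rone n) (xinvpow n 1))) | c. c \<in> Rn n}"

definition C1' :: "nat \<Rightarrow> nat \<Rightarrow> (nat set \<times> nat set) set" where
  "C1' n d = {(u, v). u \<in> Rn n \<and> v \<in> Rn n \<and>
     radd (rmul n u (radd (rone n) (xinvpow n 1))) (rmul n v (radd (rone n) (xinvpow n (d + 1)))) = {}}"

definition eff_weights :: "nat \<Rightarrow> nat \<Rightarrow> nat set" where
  "eff_weights n d = {wt j + wt u + wt v | j u v. j \<in> Rn n \<and> u \<in> Rn n \<and> v \<in> Rn n \<and>
     ((radd u (rmul n j (radd (rone n) (xpow n 1))), v) \<in> C1 n d - C2 n d \<or>
      (radd u (rmul n j (radd (rone n) (xinvpow n (d + 1)))), v) \<in> C1' n d - C2' n d)}"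

definition eff_dist :: "nat \<Rightarrow> nat \<Rightarrow> nat" where
  "eff_dist n d = Min (eff_weights n d)"

end

theory Submission
  imports Defs "HOL-Library.Z2"
begin

lemma bit_add_self[simp]: "(x::bit) + x = 0" by (cases x) simp_all
lemma bit_add_self_left[simp]: "(x::bit) + (x + y) = y" by (cases x; cases y) simp_all
lemmas bring = ac_simps bit_add_self bit_add_self_left add_0_left add_0_right
lemma of_bool_neq: "(of_bool (P \<noteq> Q) :: bit) = of_bool P + of_bool Q" by (cases P; cases Q) simp_all
lemma of_bool_eq1: "(of_bool ((b::bit) = 1) :: bit) = b" by (cases b) simp_all

definition vec :: "nat \<Rightarrow> nat set \<Rightarrow> int \<Rightarrow> bit" where
  "vec n p k = of_bool (nat (k mod int n) \<in> p)"
definition per :: "nat \<Rightarrow> (int \<Rightarrow> bit) \<Rightarrow> bool" where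
  "per n F \<longleftrightarrow> (\<forall>k. F (k mod int n) = F k)"
definition S :: "nat \<Rightarrow> (int \<Rightarrow> bit) \<Rightarrow> bit" where
  "S n g = (\<Sum>k\<in>{0..<int n}. g k)"
definition set_of :: "nat \<Rightarrow> (int \<Rightarrow> bit) \<Rightarrow> nat set" where
  "set_of n F = {k. k < n \<and> F (int k) = 1}"

lemma per_vec: "per n (vec n p)" by (simp add: per_def vec_def)
lemma per_add: "per n F \<Longrightarrow> per n G \<Longrightarrow> per n (\<lambda>k. F k + G k)" by (simp add: per_def)
lemma per_mult: "per n F \<Longrightarrow> per n G \<Longrightarrow> per n (\<lambda>k. F k * G k)" by (simp add: per_def)
lemma per_const: "per n (\<lambda>k. c)" by (simp add: per_def)
lemma per_shift: assumes "per n F" shows "per n (\<lambda>k. F (k + c))"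
  unfolding per_def
proof
  fix k
  have "F (k mod int n + c) = F ((k mod int n + c) mod int n)" using assms by (simp add: per_def)
  also have "\<dots> = F ((k + c) mod int n)" by (simp add: mod_add_left_eq)
  also have "\<dots> = F (k + c)" using assms by (simp add: per_def)
  finally show "F (k mod int n + c) = F (k + c)" .
qed
lemma per_shiftm: assumes "per n F" shows "per n (\<lambda>k. F (k - c))"
  using per_shift[OF assms, of "-c"] by simp

lemma vec_nat: "k < n \<Longrightarrow> vec n p (int k) = of_bool (k \<in> p)"
  by (simp add: vec_def)

lemma vec_int_mod: "vec n p (k mod int n) = vec n p k" by (simp add: vec_def)

lemma S_shift:
  assumes n: "n > 0" and g: "per n g"
  shows "S n (\<lambda>k. g (k + c)) = S n g"
proof -
  let ?h = "\<lambda>k. (k + c) mod int n"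
  have bij: "bij_betw ?h {0..<int n} {0..<int n}"
    apply (rule bij_betw_byWitness[where f' = "\<lambda>k. (k - c) mod int n"])
    using n by (auto simp: mod_diff_left_eq mod_add_left_eq)
  have "S n g = (\<Sum>k\<in>{0..<int n}. g (?h k))"
    unfolding S_def using sum.reindex_bij_betw[OF bij, of g] by simp
  also have "\<dots> = (\<Sum>k\<in>{0..<int n}. g (k + c))"
    using g by (simp add: per_def)
  finally show ?thesis by (simp add: S_def)
qed

lemma S_vec_mult:
  assumes "p \<subseteq> {0..<n}"
  shows "S n (\<lambda>k. vec n p k * G k) = (\<Sum>k\<in>p. G (int k))"
proof -
  have "S n (\<lambda>k. vec n p k * G k) = (\<Sum>k\<in>int ` {0..<n}. vec n p k * G k)"
    by (simp add: S_def image_int_atLeastLessThan)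
  also have "\<dots> = (\<Sum>k\<in>{0..<n}. vec n p (int k) * G (int k))"
    by (subst sum.reindex) auto
  also have "\<dots> = (\<Sum>k\<in>{0..<n}. if k \<in> p then G (int k) else 0)"
    by (rule sum.cong) (auto simp: vec_nat)
  also have "\<dots> = (\<Sum>k\<in>p. G (int k))"
    using assms by (simp add: sum.If_cases Int_absorb1)
  finally show ?thesis .
qed

lemma vec_set_of: assumes n: "n > 0" and F: "per n F" shows "vec n (set_of n F) k = F k"
proof -
  have "vec n (set_of n F) k = of_bool (F (int (nat (k mod int n))) = 1)"
    using n by (simp add: vec_def set_of_def nat_less_iff)
  also have "int (nat (k mod int n)) = k mod int n" using n by simp
  finally show ?thesis using F by (simp add: per_def of_bool_eq1)
qed

lemma set_of_sub: "set_of n F \<subseteq> {0..<n}" by (auto simp: set_of_def)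

lemma vec_inj:
  assumes "p \<subseteq> {0..<n}" "q \<subseteq> {0..<n}" "\<And>k. vec n p k = vec n q k"
  shows "p = q"
proof -
  have "\<And>k. k < n \<Longrightarrow> (k \<in> p) = (k \<in> q)"
    using assms(3) by (metis of_bool_eq_iff vec_nat)
  then show ?thesis using assms(1,2) by auto
qed

lemma vec_empty_iff:
  assumes "p \<subseteq> {0..<n}" shows "p = {} \<longleftrightarrow> (\<forall>k. vec n p k = 0)"
proof
  assume "\<forall>k. vec n p k = 0"
  then show "p = {}" using vec_inj[OF assms, of "{}"] by (simp add: vec_def)
qed (simp add: vec_def)

lemma card_bit: "(\<Sum>k\<in>p. (1::bit)) = of_nat (card p)" by simp

lemma vec_radd: "vec n (radd p q) k = vec n p k + vec n q k"
  by (simp add: vec_def radd_def of_bool_neq[symmetric])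

lemma modeq_aux:
  assumes "i < n" "k < n"
  shows "((i + t) mod n = k) \<longleftrightarrow> i = nat ((int k - int t) mod int n)"
proof -
  have n: "n > 0" using assms by simp
  have "((i + t) mod n = k) \<longleftrightarrow> ((int i + int t) mod int n = int k)"
    by (metis of_nat_add of_nat_eq_iff zmod_int)
  also have "\<dots> \<longleftrightarrow> (int i = (int k - int t) mod int n)"
  proof
    assume h: "(int i + int t) mod int n = int k"
    have "(int k - int t) mod int n = ((int i + int t) mod int n - int t) mod int n" using h by simp
    also have "\<dots> = int i mod int n" by (simp add: mod_diff_left_eq)
    also have "\<dots> = int i" using assms by simp
    finally show "int i = (int k - int t) mod int n" by simp
  next
    assume h: "int i = (int k - int t) mod int n"
    have "(int i + int t) mod int n = ((int k - int t) mod int n + int t) mod int n" using h by simp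
    also have "\<dots> = int k mod int n" by (simp add: mod_add_left_eq)
    also have "\<dots> = int k" using assms by simp
    finally show "(int i + int t) mod int n = int k" .
  qed
  also have "\<dots> \<longleftrightarrow> i = nat ((int k - int t) mod int n)"
    using n by (metis int_nat_eq nat_int pos_mod_sign of_nat_0_less_iff)
  finally show ?thesis .
qed

lemma rmul_binom_mem:
  assumes p: "p \<subseteq> {0..<n}" and t: "0 < t" "t < n" and k: "k < n"
  shows "k \<in> rmul n p {0, t} \<longleftrightarrow> ((k \<in> p) \<noteq> (nat ((int k - int t) mod int n) \<in> p))"
proof -
  define r where "r = nat ((int k - int t) mod int n)"
  have eq: "{(i, j). i \<in> p \<and> j \<in> {0, t} \<and> (i + j) mod n = k} =
        (if k \<in> p then {(k, 0)} else {}) \<union> (if r \<in> p then {(r, t)} else {})"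
  proof (rule set_eqI)
    fix x :: "nat \<times> nat"
    obtain i j where x: "x = (i, j)" by (cases x)
    show "x \<in> {(i, j). i \<in> p \<and> j \<in> {0, t} \<and> (i + j) mod n = k} \<longleftrightarrow>
       x \<in> (if k \<in> p then {(k, 0)} else {}) \<union> (if r \<in> p then {(r, t)} else {})"
    proof (cases "i \<in> p")
      case True
      then have i: "i < n" using p by auto
      have e0: "(i mod n = k) \<longleftrightarrow> i = k" using i k by auto
      have et: "((i + t) mod n = k) \<longleftrightarrow> i = r" using modeq_aux[OF i k, of t] by (simp add: r_def)
      consider "j = 0" | "j = t" | "j \<noteq> 0 \<and> j \<noteq> t" by blast
      then show ?thesis
      proof cases
        case 1 then show ?thesis using True e0 t unfolding x by auto
      next
        case 2 then show ?thesis using True et t unfolding x by auto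
      next
        case 3 then show ?thesis unfolding x by auto
      qed
    next
      case False
      then show ?thesis unfolding x by auto
    qed
  qed
  have "card {(i, j). i \<in> p \<and> j \<in> {0, t} \<and> (i + j) mod n = k} = of_bool (k \<in> p) + of_bool (r \<in> p)"
    unfolding eq using t by (auto simp: card_insert_if)
  then show ?thesis unfolding rmul_def r_def using k by auto
qed

lemma vec_rmul_binom:
  assumes p: "p \<subseteq> {0..<n}" and t: "0 < t" "t < n"
  shows "vec n (rmul n p {0, t}) k = vec n p k + vec n p (k - int t)"
proof -
  have n: "n > 0" using t by simp
  define k' where "k' = nat (k mod int n)"
  have k': "k' < n" "int k' = k mod int n" using n by (auto simp: k'_def nat_less_iff)
  have "nat ((int k' - int t) mod int n) = nat ((k - int t) mod int n)"
    using k' by (simp add: mod_diff_left_eq)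
  then show ?thesis
    using rmul_binom_mem[OF p t k'(1)] unfolding vec_def k'_def[symmetric]
    by (simp add: of_bool_neq[symmetric])
qed

lemma rmul_sub: "rmul n p q \<subseteq> {0..<n}" by (auto simp: rmul_def)
lemma radd_sub: "p \<subseteq> {0..<n} \<Longrightarrow> q \<subseteq> {0..<n} \<Longrightarrow> radd p q \<subseteq> {0..<n}" by (auto simp: radd_def)

lemma binom_xpow: "0 < r mod n \<Longrightarrow> radd (rone n) (xpow n r) = {0, r mod n}"
  by (auto simp: radd_def rone_def xpow_def)
lemma binom_xinvpow: "0 < r \<Longrightarrow> r < n \<Longrightarrow> radd (rone n) (xinvpow n r) = {0, n - r}"
  by (auto simp: radd_def rone_def xinvpow_def xpow_def)

definition cyc :: "int \<Rightarrow> (int \<Rightarrow> bit) \<Rightarrow> (int \<Rightarrow> bit) \<Rightarrow> bool" where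
  "cyc s U V \<longleftrightarrow> (\<forall>k. U k + U (k - s) + V k + V (k - 1) = 0)"
definition coc :: "int \<Rightarrow> (int \<Rightarrow> bit) \<Rightarrow> (int \<Rightarrow> bit) \<Rightarrow> bool" where
  "coc s A B \<longleftrightarrow> (\<forall>k. A k + A (k + 1) + B k + B (k + s) = 0)"
definition pr :: "nat \<Rightarrow> (int \<Rightarrow> bit) \<Rightarrow> (int \<Rightarrow> bit) \<Rightarrow> (int \<Rightarrow> bit) \<Rightarrow> (int \<Rightarrow> bit) \<Rightarrow> bit" where
  "pr n U V A B = S n (\<lambda>k. U k * A k + V k * B k)"

lemma bit_eq_add: "((x::bit) = y) \<longleftrightarrow> x + y = 0" by (cases x; cases y) simp_all
lemma bit4: "(a::bit) + b + c + d = 0 \<Longrightarrow> c + d = a + b" by (cases a; cases b; cases c; cases d) simp_all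
lemma S_add: "S n (\<lambda>k. f k + g k) = S n f + S n g" by (simp only: S_def sum.distrib)
lemma S_zero: "S n (\<lambda>k. 0) = 0" by (simp add: S_def)
lemma S_cong: "(\<And>k. f k = g k) \<Longrightarrow> S n f = S n g" by (simp add: S_def)
lemma S_cmult: "S n (\<lambda>k. c * f k) = c * S n f" by (simp only: S_def sum_distrib_left)

lemma pr_add: "pr n (\<lambda>k. U1 k + U2 k) (\<lambda>k. V1 k + V2 k) A B = pr n U1 V1 A B + pr n U2 V2 A B"
  unfolding pr_def by (subst S_add[symmetric]) (rule S_cong, simp only: bring distrib_left distrib_right)

lemma L1:
  assumes n: "n > 0" and C: "per n C" and A: "per n A" and B: "per n B" and coc: "coc s A B"
  shows "pr n (\<lambda>k. C k + C (k - 1)) (\<lambda>k. C k + C (k - s)) A B = 0"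
proof -
  have sh1: "S n (\<lambda>k. C (k - 1) * A k) = S n (\<lambda>k. C k * A (k + 1))"
    using S_shift[OF n per_mult[OF per_shiftm[OF C, of 1] A], of 1] by simp
  have sh2: "S n (\<lambda>k. C (k - s) * B k) = S n (\<lambda>k. C k * B (k + s))"
    using S_shift[OF n per_mult[OF per_shiftm[OF C, of s] B], of s] by simp
  have "pr n (\<lambda>k. C k + C (k - 1)) (\<lambda>k. C k + C (k - s)) A B =
     S n (\<lambda>k. C k * A k) + S n (\<lambda>k. C (k - 1) * A k) + (S n (\<lambda>k. C k * B k) + S n (\<lambda>k. C (k - s) * B k))"
    unfolding pr_def by (simp only: S_add[symmetric] distrib_right)
  also have "\<dots> = S n (\<lambda>k. C k * (A k + A (k + 1) + B k + B (k + s)))"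
    unfolding sh1 sh2 by (simp only: S_add[symmetric] distrib_left add.assoc)
  also have "\<dots> = 0" using coc by (simp add: coc_def S_zero)
  finally show ?thesis .
qed

lemma L2:
  assumes n: "n > 0" and U: "per n U" and V: "per n V" and A: "per n A" and B: "per n B"
    and coc: "coc s A B" and cyc: "cyc s U V"
  shows "pr n U V (\<lambda>k. A (k - 1)) (\<lambda>k. B (k - 1)) = pr n U V A B"
proof -
  have g: "per n (\<lambda>k. U k * A (k - 1) + V k * B (k - 1))"
    by (intro per_add per_mult U V per_shiftm A B)
  have "pr n U V (\<lambda>k. A (k - 1)) (\<lambda>k. B (k - 1)) = S n (\<lambda>k. U (k + 1) * A k + V (k + 1) * B k)"
    unfolding pr_def using S_shift[OF n g, of 1] by simp
  also have "\<dots> = pr n (\<lambda>k. U (k + 1) + U k) (\<lambda>k. V (k + 1) + V k) A B + pr n U V A B"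
    unfolding pr_def by (subst S_add[symmetric]) (rule S_cong, simp only: bring distrib_left distrib_right)
  also have "pr n (\<lambda>k. U (k + 1) + U k) (\<lambda>k. V (k + 1) + V k) A B =
      pr n (\<lambda>k. U (k + 1) + U (k - 1 + 1)) (\<lambda>k. U (k + 1) + U (k - s + 1)) A B"
  proof -
    have "\<And>k. V (k + 1) + V k = U (k + 1) + U (k - s + 1)"
    proof -
      fix k
      have "U (k + 1) + U (k + 1 - s) + V (k + 1) + V (k + 1 - 1) = 0" using cyc by (simp only: cyc_def)
      moreover have "k + 1 - s = k - s + 1" "k + 1 - 1 = k" by simp_all
      ultimately show "V (k + 1) + V k = U (k + 1) + U (k - s + 1)"
        using bit4 by metis
    qed
    then show ?thesis by simp
  qed
  also have "\<dots> = 0"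
    using L1[OF n per_shift[OF U, of 1] A B coc] by simp
  finally show ?thesis by simp
qed

lemma coc_shift: "coc s A B \<Longrightarrow> coc s (\<lambda>k. A (k - t)) (\<lambda>k. B (k - t))"
  unfolding coc_def
proof
  fix k assume h: "\<forall>k. A k + A (k + 1) + B k + B (k + s) = 0"
  show "A (k - t) + A (k + 1 - t) + B (k - t) + B (k + s - t) = 0"
    using h[rule_format, of "k - t"] by (simp add: algebra_simps)
qed

lemma L2_iter:
  assumes n: "n > 0" and U: "per n U" and V: "per n V" and A: "per n A" and B: "per n B"
    and coc: "coc s A B" and cyc: "cyc s U V"
  shows "pr n U V (\<lambda>k. A (k - int t)) (\<lambda>k. B (k - int t)) = pr n U V A B"
proof (induction t)
  case 0 then show ?case by simp
next
  case (Suc t)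
  have "pr n U V (\<lambda>k. A (k - 1 - int t)) (\<lambda>k. B (k - 1 - int t)) = pr n U V (\<lambda>k. A (k - int t)) (\<lambda>k. B (k - int t))"
    using L2[OF n U V per_shiftm[OF A] per_shiftm[OF B] coc_shift[OF coc] cyc] by simp
  then show ?case using Suc by (simp add: algebra_simps)
qed

definition delta :: "nat \<Rightarrow> int \<Rightarrow> int \<Rightarrow> bit" where "delta n c k = of_bool (k mod int n = c)"
definition Ind :: "nat \<Rightarrow> int \<Rightarrow> int \<Rightarrow> bit" where "Ind n s k = of_bool (k mod int n < s)"

lemma bit_sum0: "(a::bit) + b = 0 \<Longrightarrow> a = b" by (cases a; cases b) simp_all
lemma bit_mv: "(a::bit) + b = c + d \<Longrightarrow> c = a + b + d" by (cases a; cases b; cases c; cases d) simp_all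
lemma bit_mv2: "(a::bit) + b + c + d = w \<Longrightarrow> a = b + c + w + d" by (cases a; cases b; cases c; cases d; cases w) simp_all

lemma mod_pred:
  assumes "n > 0"
  shows "(k - 1) mod int n = (if k mod int n = 0 then int n - 1 else k mod int n - 1)"
proof -
  have "(k - 1) mod int n = (k mod int n - 1) mod int n" by (simp add: mod_diff_left_eq)
  moreover have "0 \<le> k mod int n" "k mod int n < int n" using assms by simp_all
  ultimately show ?thesis
    by (cases "k mod int n = 0") (auto simp: mod_pos_pos_trivial zmod_minus1)
qed

lemma mod_sub_zero:
  assumes "0 < s" "s < int n"
  shows "((k - s) mod int n = 0) \<longleftrightarrow> k mod int n = s"
proof -
  have "((k - s) mod int n = 0) \<longleftrightarrow> int n dvd (k - s)" by (simp add: dvd_eq_mod_eq_0)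
  also have "\<dots> \<longleftrightarrow> k mod int n = s mod int n" by (simp add: mod_eq_dvd_iff)
  also have "s mod int n = s" using assms by simp
  finally show ?thesis .
qed

lemma Ind_step:
  assumes n: "n > 0" and s: "0 < s" "s < int n"
  shows "Ind n s k + Ind n s (k - 1) = delta n 0 k + delta n 0 (k - s)"
  using mod_pred[OF n, of k] mod_sub_zero[OF s, of k] s
  by (auto simp: Ind_def delta_def)

definition pre :: "nat \<Rightarrow> (int \<Rightarrow> bit) \<Rightarrow> int \<Rightarrow> bit" where
  "pre n U k = (\<Sum>i\<in>{1..k mod int n}. U i)"

lemma per_pre: "per n (pre n U)" by (simp add: per_def pre_def)

lemma pre_step:
  assumes n: "n > 0" and U: "per n U"
  shows "pre n U k + pre n U (k - 1) = U k + S n U * delta n 0 k"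
proof (cases "k mod int n = 0")
  case True
  have a: "pre n U k = 0" using True by (simp add: pre_def)
  have b: "pre n U (k - 1) = (\<Sum>i\<in>{1..int n - 1}. U i)"
    using True mod_pred[OF n, of k] by (simp add: pre_def)
  have "{0..<int n} = insert 0 {1..int n - 1}" using n by auto
  then have c: "S n U = U 0 + (\<Sum>i\<in>{1..int n - 1}. U i)" by (simp add: S_def)
  have d: "U k = U 0" using U True by (metis per_def)
  have e: "delta n 0 k = 1" using True by (simp add: delta_def)
  show ?thesis unfolding a b c d e by (simp only: bring mult_1_left)
next
  case False
  have r: "0 < k mod int n" using False n by (metis pos_mod_sign of_nat_0_less_iff order_le_less)
  have "{1..k mod int n} = insert (k mod int n) {1..k mod int n - 1}" using r by auto
  then have a: "pre n U k = U (k mod int n) + (\<Sum>i\<in>{1..k mod int n - 1}. U i)"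
    by (simp add: pre_def)
  have b: "pre n U (k - 1) = (\<Sum>i\<in>{1..k mod int n - 1}. U i)"
    using False mod_pred[OF n, of k] by (simp add: pre_def)
  have d: "U (k mod int n) = U k" using U by (simp add: per_def)
  have e: "delta n 0 k = 0" using False by (simp add: delta_def)
  show ?thesis unfolding a b d e by (simp only: bring mult_zero_left)
qed

lemma const_of_step:
  assumes n: "n > 0" and W: "per n W" and st: "\<And>k. W k + W (k - 1) = 0"
  shows "W k = W 0"
proof -
  have "W (int j) = W 0" for j
  proof (induction j)
    case (Suc j)
    have "W (int (Suc j)) + W (int (Suc j) - 1) = 0" by (rule st)
    then have "W (int (Suc j)) + W (int j) = 0" by simp
    then show ?case using Suc bit_sum0 by metis
  qed simp
  then have "W (int (nat (k mod int n))) = W 0" by blast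
  then show ?thesis using W n by (simp add: per_def)
qed

lemma L3:
  assumes n: "n > 0" and s: "0 < s" "s < int n" and U: "per n U" and V: "per n V" and cyc: "cyc s U V"
  shows "\<exists>C p w. per n C \<and> (\<forall>k. U k = C k + C (k - 1) + p * delta n 0 k) \<and>
                  (\<forall>k. V k = C k + C (k - s) + w + p * Ind n s k)"
proof -
  define C where "C = pre n U"
  define p where "p = S n U"
  define W where "W = (\<lambda>k. V k + C k + C (k - s) + p * Ind n s k)"
  have Cs: "\<And>k. C k + C (k - 1) = U k + p * delta n 0 k"
    unfolding C_def p_def by (rule pre_step[OF n U])
  have pC: "per n C" unfolding C_def by (rule per_pre)
  have pCs: "per n (\<lambda>k. C (k - s))" by (rule per_shiftm[OF pC])
  have pI: "per n (Ind n s)" by (simp add: per_def Ind_def)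
  have perW: "per n W" unfolding W_def
    using per_add[OF per_add[OF per_add[OF V pC] pCs] per_mult[OF per_const pI]] by simp
  have stepW: "W k + W (k - 1) = 0" for k
  proof -
    have c1: "C (k - s) + C (k - s - 1) = U (k - s) + p * delta n 0 (k - s)" using Cs[of "k - s"] by simp
    have c2: "C (k - 1 - s) = C (k - s - 1)" by (simp add: algebra_simps)
    have cy: "U k + U (k - s) + V k + V (k - 1) = 0" using cyc by (simp add: cyc_def)
    have "W k + W (k - 1) = (V k + V (k - 1)) + (C k + C (k - 1)) + (C (k - s) + C (k - s - 1))
             + p * (Ind n s k + Ind n s (k - 1))"
      unfolding W_def c2 by (simp only: bring distrib_left)
    also have "\<dots> = (U k + U (k - s) + V k + V (k - 1))"
      unfolding Cs c1 Ind_step[OF n s] by (simp only: bring distrib_left)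
    finally show ?thesis using cy by simp
  qed
  have Wc: "\<And>k. W k = W 0" using const_of_step[OF n perW stepW] by blast
  show ?thesis
  proof (intro exI conjI allI)
    show "per n C" unfolding C_def by (rule per_pre)
    fix k
    show "U k = C k + C (k - 1) + p * delta n 0 k" using Cs[of k] by (rule bit_mv)
    show "V k = C k + C (k - s) + W 0 + p * Ind n s k"
      using Wc[of k] unfolding W_def by (rule bit_mv2)
  qed
qed

lemma S_delta: assumes n: "n > 0" shows "S n (\<lambda>k. delta n 0 k * A k) = A 0"
proof -
  have "S n (\<lambda>k. delta n 0 k * A k) = (\<Sum>k\<in>{0..<int n}. if k = 0 then A k else 0)"
    unfolding S_def by (rule sum.cong) (auto simp: delta_def)
  also have "\<dots> = A 0" using n by (simp add: sum.delta)
  finally show ?thesis .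
qed

lemma S_Ind: assumes n: "s \<le> int n" "0 \<le> s" shows "S n (\<lambda>k. Ind n s k * B k) = (\<Sum>k\<in>{0..<s}. B k)"
proof -
  have "S n (\<lambda>k. Ind n s k * B k) = (\<Sum>k\<in>{0..<int n}. if k < s then B k else 0)"
    unfolding S_def by (rule sum.cong) (auto simp: Ind_def)
  also have "\<dots> = (\<Sum>k\<in>{k\<in>{0..<int n}. k < s}. B k)" by (rule sum.inter_filter[symmetric]) simp
  also have "{k\<in>{0..<int n}. k < s} = {0..<s}" using n by auto
  finally show ?thesis .
qed

lemma L5:
  assumes n: "n > 0" and s: "0 < s" "s < int n" and A: "per n A" and B: "per n B" and coc: "coc s A B"
    and C: "per n C" and U: "\<And>k. U k = C k + C (k - 1) + p * delta n 0 k"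
    and V: "\<And>k. V k = C k + C (k - s) + w + p * Ind n s k"
  shows "pr n U V A B = p * (A 0 + (\<Sum>k\<in>{0..<s}. B k)) + w * S n B"
proof -
  have "pr n U V A B = pr n (\<lambda>k. C k + C (k - 1) + p * delta n 0 k) (\<lambda>k. C k + C (k - s) + (w + p * Ind n s k)) A B"
    unfolding U V by (simp only: add.assoc)
  also have "\<dots> = pr n (\<lambda>k. C k + C (k - 1)) (\<lambda>k. C k + C (k - s)) A B + pr n (\<lambda>k. p * delta n 0 k) (\<lambda>k. w + p * Ind n s k) A B"
    by (rule pr_add)
  also have "pr n (\<lambda>k. C k + C (k - 1)) (\<lambda>k. C k + C (k - s)) A B = 0" by (rule L1[OF n C A B coc])
  also have "pr n (\<lambda>k. p * delta n 0 k) (\<lambda>k. w + p * Ind n s k) A B =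
       p * S n (\<lambda>k. delta n 0 k * A k) + w * S n B + p * S n (\<lambda>k. Ind n s k * B k)"
    unfolding pr_def S_cmult[symmetric] S_add[symmetric] by (rule S_cong) (simp only: distrib_left distrib_right ac_simps)
  also have "\<dots> = p * (A 0 + (\<Sum>k\<in>{0..<s}. B k)) + w * S n B"
  proof -
    have "s \<le> int n" "0 \<le> s" using s by auto
    note si = S_Ind[OF this, of B]
    show ?thesis unfolding S_delta[OF n] si by (simp only: distrib_left ac_simps)
  qed
  finally show ?thesis by simp
qed

lemma sum_bit_nz: "(\<Sum>k\<in>K. f k) = (1::bit) \<Longrightarrow> \<exists>k\<in>K. f k = 1"
  by (metis (mono_tags, lifting) bit_not_one_iff sum.neutral zero_neq_one)

lemma bit3: "(a::bit) + b + c = 1 \<Longrightarrow> a = 1 \<or> b = 1 \<or> c = 1" by (cases a; cases b; cases c) simp_all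

lemma card_shift:
  assumes n: "n > 0" and F: "per n F"
  shows "card {t. t < n \<and> F (k - int t) = 1} = card {r. r < n \<and> F (int r) = 1}"
proof (rule bij_betw_same_card)
  show "bij_betw (\<lambda>t. nat ((k - int t) mod int n)) {t. t < n \<and> F (k - int t) = 1} {r. r < n \<and> F (int r) = 1}"
  proof (rule bij_betw_byWitness[where f' = "\<lambda>r. nat ((k - int r) mod int n)"])
    show "\<forall>a\<in>{t. t < n \<and> F (k - int t) = 1}. nat ((k - int (nat ((k - int a) mod int n))) mod int n) = a"
    proof
      fix a assume a: "a \<in> {t. t < n \<and> F (k - int t) = 1}"
      have "(k - int (nat ((k - int a) mod int n))) mod int n = (k - (k - int a) mod int n) mod int n"
        using n by simp
      also have "\<dots> = (k - (k - int a)) mod int n" by (simp add: mod_diff_right_eq)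
      also have "\<dots> = int a" using a by simp
      finally show "nat ((k - int (nat ((k - int a) mod int n))) mod int n) = a" by simp
    qed
    show "\<forall>a\<in>{r. r < n \<and> F (int r) = 1}. nat ((k - int (nat ((k - int a) mod int n))) mod int n) = a"
    proof
      fix a assume a: "a \<in> {r. r < n \<and> F (int r) = 1}"
      have "(k - int (nat ((k - int a) mod int n))) mod int n = (k - (k - int a) mod int n) mod int n"
        using n by simp
      also have "\<dots> = (k - (k - int a)) mod int n" by (simp add: mod_diff_right_eq)
      also have "\<dots> = int a" using a by simp
      finally show "nat ((k - int (nat ((k - int a) mod int n))) mod int n) = a" by simp
    qed
    show "(\<lambda>t. nat ((k - int t) mod int n)) ` {t. t < n \<and> F (k - int t) = 1} \<subseteq> {r. r < n \<and> F (int r) = 1}"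
    proof
      fix x assume "x \<in> (\<lambda>t. nat ((k - int t) mod int n)) ` {t. t < n \<and> F (k - int t) = 1}"
      then obtain t where t: "t < n" "F (k - int t) = 1" "x = nat ((k - int t) mod int n)" by auto
      have "int x = (k - int t) mod int n" using t n by simp
      then have "F (int x) = F (k - int t)" using F by (simp add: per_def)
      then show "x \<in> {r. r < n \<and> F (int r) = 1}" using t n by (simp add: nat_less_iff)
    qed
    show "(\<lambda>r. nat ((k - int r) mod int n)) ` {r. r < n \<and> F (int r) = 1} \<subseteq> {t. t < n \<and> F (k - int t) = 1}"
    proof
      fix x assume "x \<in> (\<lambda>r. nat ((k - int r) mod int n)) ` {r. r < n \<and> F (int r) = 1}"
      then obtain r where r: "r < n" "F (int r) = 1" "x = nat ((k - int r) mod int n)" by auto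
      have "int x = (k - int r) mod int n" using r n by simp
      then have "(k - int x) mod int n = int r" using r by (simp add: mod_diff_right_eq)
      then have "F (k - int x) = F (int r)" using F by (metis per_def)
      then show "x \<in> {t. t < n \<and> F (k - int t) = 1}" using r n by (simp add: nat_less_iff)
    qed
  qed
qed

lemma card_vec: "a \<subseteq> {0..<n} \<Longrightarrow> card {r. r < n \<and> vec n a (int r) = 1} = card a"
  by (rule arg_cong[where f = card]) (auto simp: vec_nat)

definition tau :: "nat \<Rightarrow> nat set \<Rightarrow> nat" where
  "tau n a = card {r. r < n \<and> vec n a (int r) + vec n a (int r + 1) = 1}"

lemma count_bound:
  assumes n: "n > 0" and a: "a \<subseteq> {0..<n}" and b: "b \<subseteq> {0..<n}"
    and u: "u \<subseteq> {0..<n}" and v: "v \<subseteq> {0..<n}" and j: "j \<subseteq> {0..<n}"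
    and all: "\<And>t. t < n \<Longrightarrow> pr n (\<lambda>k. vec n u k + vec n j k + vec n j (k - 1)) (vec n v)
                      (\<lambda>k. vec n a (k - int t)) (\<lambda>k. vec n b (k - int t)) = 1"
  shows "n \<le> card a * card u + card b * card v + tau n a * card j"
proof -
  let ?A = "vec n a" and ?B = "vec n b"
  let ?H = "\<lambda>x. ?A x + ?A (x + 1)"
  have pA: "per n ?A" "per n ?B" by (rule per_vec)+
  have pH: "per n ?H" using per_add[OF pA(1) per_shift[OF pA(1), of 1]] by simp
  define Tu where "Tu = (\<Union>k\<in>u. {t. t < n \<and> ?A (int k - int t) = 1})"
  define Tj where "Tj = (\<Union>k\<in>j. {t. t < n \<and> ?H (int k - int t) = 1})"
  define Tv where "Tv = (\<Union>k\<in>v. {t. t < n \<and> ?B (int k - int t) = 1})"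
  have sub: "{0..<n} \<subseteq> Tu \<union> Tj \<union> Tv"
  proof
    fix t assume "t \<in> {0..<n}"
    then have t: "t < n" by simp
    let ?At = "\<lambda>k. ?A (k - int t)" and ?Bt = "\<lambda>k. ?B (k - int t)"
    have sh: "S n (\<lambda>k. vec n j (k - 1) * ?At k) = S n (\<lambda>k. vec n j k * ?At (k + 1))"
      using S_shift[OF n per_mult[OF per_shiftm[OF per_vec[of n j], of 1] per_shiftm[OF pA(1), of "int t"]], of 1]
      by simp
    have "pr n (\<lambda>k. vec n u k + vec n j k + vec n j (k - 1)) (vec n v) ?At ?Bt =
        S n (\<lambda>k. vec n u k * ?At k) + S n (\<lambda>k. vec n j k * ?At k) + S n (\<lambda>k. vec n j (k - 1) * ?At k) + S n (\<lambda>k. vec n v k * ?Bt k)"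
      unfolding pr_def S_add[symmetric] by (rule S_cong) (simp only: distrib_left distrib_right add.assoc)
    also have "\<dots> = S n (\<lambda>k. vec n u k * ?At k) + S n (\<lambda>k. vec n j k * ?At k) + S n (\<lambda>k. vec n j k * ?At (k + 1)) + S n (\<lambda>k. vec n v k * ?Bt k)"
      by (simp only: sh)
    also have "\<dots> = (\<Sum>k\<in>u. ?At (int k)) + (\<Sum>k\<in>j. ?At (int k)) + (\<Sum>k\<in>j. ?At (int k + 1)) + (\<Sum>k\<in>v. ?Bt (int k))"
      by (simp only: S_vec_mult[OF u] S_vec_mult[OF j] S_vec_mult[OF v])
    finally have h1: "pr n (\<lambda>k. vec n u k + vec n j k + vec n j (k - 1)) (vec n v) ?At ?Bt =
       (\<Sum>k\<in>u. ?At (int k)) + (\<Sum>k\<in>j. ?At (int k)) + (\<Sum>k\<in>j. ?At (int k + 1)) + (\<Sum>k\<in>v. ?Bt (int k))" .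
    have h2: "(\<Sum>k\<in>j. ?At (int k)) + (\<Sum>k\<in>j. ?At (int k + 1)) = (\<Sum>k\<in>j. ?H (int k - int t))"
    proof -
      have e: "\<And>k::nat. int k + 1 - int t = int k - int t + 1" by simp
      show ?thesis by (simp only: sum.distrib[symmetric] e)
    qed
    have eqp: "pr n (\<lambda>k. vec n u k + vec n j k + vec n j (k - 1)) (vec n v) ?At ?Bt =
      (\<Sum>k\<in>u. ?A (int k - int t)) + (\<Sum>k\<in>j. ?H (int k - int t)) + (\<Sum>k\<in>v. ?B (int k - int t))"
      unfolding h1 h2[symmetric] by (simp only: add.assoc)
    have "(\<Sum>k\<in>u. ?A (int k - int t)) + (\<Sum>k\<in>j. ?H (int k - int t)) + (\<Sum>k\<in>v. ?B (int k - int t)) = 1"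
      by (simp only: eqp[symmetric] all[OF t])
    then have "(\<Sum>k\<in>u. ?A (int k - int t)) = 1 \<or> (\<Sum>k\<in>j. ?H (int k - int t)) = 1 \<or> (\<Sum>k\<in>v. ?B (int k - int t)) = 1"
      by (rule bit3)
    then show "t \<in> Tu \<union> Tj \<union> Tv"
    proof (elim disjE)
      assume "(\<Sum>k\<in>u. ?A (int k - int t)) = 1"
      then obtain k where "k \<in> u" "?A (int k - int t) = 1" using sum_bit_nz by blast
      then show ?thesis using t unfolding Tu_def by blast
    next
      assume "(\<Sum>k\<in>j. ?H (int k - int t)) = 1"
      then obtain k where "k \<in> j" "?H (int k - int t) = 1" using sum_bit_nz[of "\<lambda>k. ?H (int k - int t)"] by blast
      then show ?thesis using t unfolding Tj_def by blast
    next
      assume "(\<Sum>k\<in>v. ?B (int k - int t)) = 1"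
      then obtain k where "k \<in> v" "?B (int k - int t) = 1" using sum_bit_nz by blast
      then show ?thesis using t unfolding Tv_def by blast
    qed
  qed
  have fin: "finite u" "finite j" "finite v" using u j v finite_subset by blast+
  have "n \<le> card (Tu \<union> Tj \<union> Tv)"
    using card_mono[OF _ sub] unfolding Tu_def Tj_def Tv_def using fin by auto
  also have "\<dots> \<le> card Tu + card Tj + card Tv" by (meson card_Un_le add_le_mono le_trans order_refl)
  also have "card Tu \<le> (\<Sum>k\<in>u. card {t. t < n \<and> ?A (int k - int t) = 1})" unfolding Tu_def by (rule card_UN_le[OF fin(1)])
  also have "\<dots> = card u * card a" using card_shift[OF n pA(1)] card_vec[OF a] by simp
  also have "card Tj \<le> (\<Sum>k\<in>j. card {t. t < n \<and> ?H (int k - int t) = 1})" unfolding Tj_def by (rule card_UN_le[OF fin(2)])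
  also have "\<dots> = card j * tau n a" using card_shift[OF n pH] by (simp add: tau_def)
  also have "card Tv \<le> (\<Sum>k\<in>v. card {t. t < n \<and> ?B (int k - int t) = 1})" unfolding Tv_def by (rule card_UN_le[OF fin(3)])
  also have "\<dots> = card v * card b" using card_shift[OF n pA(2)] card_vec[OF b] by simp
  finally show ?thesis by (simp add: mult.commute)
qed

lemma of_bool_add_bit: "(of_bool P + of_bool Q :: bit) = of_bool (P \<noteq> Q)" by (cases P; cases Q) simp_all

lemma vec_interval: "n > 0 \<Longrightarrow> vec n {lo..hi} k = of_bool (int lo \<le> k mod int n \<and> k mod int n \<le> int hi)"
  unfolding vec_def by (simp add: nat_le_iff le_nat_iff)

lemma mod_succ:
  assumes "n > 0"
  shows "(k + 1) mod int n = (if k mod int n = int n - 1 then 0 else k mod int n + 1)"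
proof -
  have "(k + 1) mod int n = (k mod int n + 1) mod int n" by (simp add: mod_add_left_eq)
  moreover have "0 \<le> k mod int n" "k mod int n < int n" using assms by simp_all
  ultimately show ?thesis by (cases "k mod int n = int n - 1") (auto simp: mod_pos_pos_trivial)
qed

lemma interval_step:
  assumes "1 \<le> lo" "lo \<le> hi" "hi < n"
  shows "vec n {lo..hi} k + vec n {lo..hi} (k + 1) = delta n (int lo - 1) k + delta n (int hi) k"
proof -
  have n: "n > 0" using assms by simp
  have r: "0 \<le> k mod int n" "k mod int n < int n" using n by simp_all
  show ?thesis
    unfolding vec_interval[OF n] mod_succ[OF n] delta_def of_bool_add_bit
    using assms r by (auto simp: of_bool_eq_iff)
qed

lemma interval_tau:
  assumes "1 \<le> lo" "lo \<le> hi" "hi < n"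
  shows "tau n {lo..hi} = 2"
proof -
  have n: "n > 0" using assms by simp
  have "{r. r < n \<and> vec n {lo..hi} (int r) + vec n {lo..hi} (int r + 1) = 1} = {lo - 1, hi}"
    unfolding interval_step[OF assms] delta_def of_bool_add_bit using assms by auto
  then show ?thesis unfolding tau_def using assms by simp
qed

definition prog :: "nat \<Rightarrow> nat \<Rightarrow> nat \<Rightarrow> nat \<Rightarrow> nat \<Rightarrow> nat set" where
  "prog n s c lo hi = (\<lambda>i. (c + i * s) mod n) ` {lo..hi}"

lemma nat_mod_add_cancel: "((x + s) mod n = (y + s) mod n) \<longleftrightarrow> x mod n = y mod n" for x y s n :: nat
proof
  assume h: "(x + s) mod n = (y + s) mod n"
  have "int (x + s) mod int n = int (y + s) mod int n" using h by (metis zmod_int)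
  then have "(int x + int s) mod int n = (int y + int s) mod int n" by simp
  then have "(int x + int s - int s) mod int n = (int y + int s - int s) mod int n"
    by (rule mod_diff_cong) simp
  then have "int x mod int n = int y mod int n" by simp
  then show "x mod n = y mod n" by (metis of_nat_eq_iff zmod_int)
next
  assume "x mod n = y mod n"
  then show "(x + s) mod n = (y + s) mod n" by (metis mod_add_left_eq)
qed

lemma prog_unique:
  fixes n s c i i' :: nat
  assumes n: "n > 0" and cop: "coprime s n" and i: "i < n" "i' < n"
    and eq: "(c + i * s) mod n = (c + i' * s) mod n"
  shows "i = i'"
proof -
  have gen: "i = i'" if le: "i' \<le> i" and i: "i < n" and eq: "(c + i * s) mod n = (c + i' * s) mod n" for i i' :: nat
  proof -
    have e1: "i * s = i' * s + (i - i') * s" using le by (metis add_mult_distrib le_add_diff_inverse)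
    have e2: "(i - i') * s + (c + i' * s) = c + i * s" using e1 by simp
    have "((i - i') * s + (c + i' * s)) mod n = (0 + (c + i' * s)) mod n"
      unfolding e2 using eq by simp
    then have "((i - i') * s) mod n = 0 mod n" by (simp only: nat_mod_add_cancel)
    then have "n dvd (i - i') * s" by (simp add: mod_eq_0_iff_dvd)
    moreover have cns: "coprime n s" using cop by (rule coprime_commute[THEN iffD1])
    ultimately have "n dvd (i - i')" using coprime_dvd_mult_left_iff[OF cns] by simp
    moreover have "i - i' < n" using i by simp
    ultimately have "i - i' = 0" using nat_dvd_not_less[of "i - i'" n] by (cases "i - i' = 0") auto
    then show ?thesis using le by simp
  qed
  show ?thesis
  proof (cases "i' \<le> i")
    case True then show ?thesis using gen[OF True i(1) eq] by simp
  next
    case False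
    then have "i \<le> i'" by simp
    from gen[OF this i(2) eq[symmetric]] show ?thesis by simp
  qed
qed

lemma prog_sub: "n > 0 \<Longrightarrow> prog n s c lo hi \<subseteq> {0..<n}" by (auto simp: prog_def)

lemma prog_card:
  assumes n: "n > 0" and cop: "coprime s n" and "hi < n"
  shows "card (prog n s c lo hi) = Suc hi - lo"
proof -
  have "inj_on (\<lambda>i. (c + i * s) mod n) {lo..hi}"
  proof (rule inj_onI)
    fix x y assume xy: "x \<in> {lo..hi}" "y \<in> {lo..hi}" "(c + x * s) mod n = (c + y * s) mod n"
    have "x < n" "y < n" using xy(1,2) assms(3) by auto
    then show "x = y" using prog_unique[OF n cop _ _ xy(3)] by blast
  qed
  then show ?thesis unfolding prog_def by (simp add: card_image)
qed

lemma prog_step: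
  assumes n: "n > 0" and cop: "coprime s n" and lo: "1 \<le> lo" "lo \<le> hi" "hi < n"
  shows "vec n (prog n s c lo hi) k + vec n (prog n s c lo hi) (k + int s) =
         delta n (int ((c + (lo - 1) * s) mod n)) k + delta n (int ((c + hi * s) mod n)) k"
proof -
  define r where "r = nat (k mod int n)"
  have r: "r < n" "int r = k mod int n" using n by (auto simp: r_def nat_less_iff)
  define E where "E i \<longleftrightarrow> r = (c + i * s) mod n" for i
  have r2: "nat ((k + int s) mod int n) = (r + s) mod n"
  proof -
    have "(k + int s) mod int n = (int r + int s) mod int n" using r by (simp add: mod_add_left_eq)
    then show ?thesis by (metis nat_int of_nat_add zmod_int)
  qed
  have m1: "vec n (prog n s c lo hi) k = of_bool (\<exists>i\<in>{lo..hi}. E i)"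
    unfolding vec_def r_def[symmetric] prog_def E_def by auto
  have shiftE: "((r + s) mod n = (c + i * s) mod n) \<longleftrightarrow> E (i - 1)" if "1 \<le> i" for i
  proof -
    have "c + i * s = (c + (i - 1) * s) + s" using that by (cases i) auto
    then have "((r + s) mod n = (c + i * s) mod n) \<longleftrightarrow> r mod n = (c + (i - 1) * s) mod n"
      using nat_mod_add_cancel by metis
    then show ?thesis using r by (simp add: E_def)
  qed
  have m2: "vec n (prog n s c lo hi) (k + int s) = of_bool (\<exists>i\<in>{lo - 1..hi - 1}. E i)"
  proof -
    have "(\<exists>i\<in>{lo..hi}. (r + s) mod n = (c + i * s) mod n) \<longleftrightarrow> (\<exists>i\<in>{lo..hi}. E (i - 1))"
      using shiftE lo by auto
    also have "\<dots> \<longleftrightarrow> (\<exists>i\<in>{lo - 1..hi - 1}. E i)"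
    proof
      assume "\<exists>i\<in>{lo..hi}. E (i - 1)" then show "\<exists>i\<in>{lo - 1..hi - 1}. E i" by force
    next
      assume "\<exists>i\<in>{lo - 1..hi - 1}. E i"
      then obtain i where "i \<in> {lo - 1..hi - 1}" "E i" by blast
      then show "\<exists>i\<in>{lo..hi}. E (i - 1)" using lo by (intro bexI[of _ "i + 1"]) auto
    qed
    finally show ?thesis unfolding vec_def r2 prog_def by auto
  qed
  have d1: "delta n (int ((c + (lo - 1) * s) mod n)) k = of_bool (E (lo - 1))"
    unfolding delta_def E_def r(2)[symmetric] by simp
  have d2: "delta n (int ((c + hi * s) mod n)) k = of_bool (E hi)"
    unfolding delta_def E_def r(2)[symmetric] by simp
  have uniq: "\<And>i i'. i \<le> hi \<Longrightarrow> i' \<le> hi \<Longrightarrow> E i \<Longrightarrow> E i' \<Longrightarrow> i = i'"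
    unfolding E_def using prog_unique[OF n cop] lo by (metis le_less_trans)
  show ?thesis unfolding m1 m2 d1 d2 of_bool_add_bit
  proof (cases "\<exists>i\<in>{lo - 1..hi}. E i")
    case True
    then obtain i0 where i0: "i0 \<in> {lo - 1..hi}" "E i0" by blast
    have u: "\<And>i. i \<le> hi \<Longrightarrow> E i \<longleftrightarrow> i = i0" using uniq i0 by auto
    show "of_bool ((\<exists>i\<in>{lo..hi}. E i) \<noteq> (\<exists>i\<in>{lo - 1..hi - 1}. E i)) = (of_bool (E (lo - 1) \<noteq> E hi) :: bit)"
    proof -
      have e1: "(\<exists>i\<in>{lo..hi}. E i) \<longleftrightarrow> lo \<le> i0 \<and> i0 \<le> hi" using u i0 by auto
      have e2: "(\<exists>i\<in>{lo - 1..hi - 1}. E i) \<longleftrightarrow> lo - 1 \<le> i0 \<and> i0 \<le> hi - 1"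
      proof
        assume "\<exists>i\<in>{lo - 1..hi - 1}. E i"
        then obtain i where "i \<in> {lo - 1..hi - 1}" "E i" by blast
        then show "lo - 1 \<le> i0 \<and> i0 \<le> hi - 1" using u[of i] by auto
      next
        assume "lo - 1 \<le> i0 \<and> i0 \<le> hi - 1"
        then show "\<exists>i\<in>{lo - 1..hi - 1}. E i" using i0 by auto
      qed
      have e3: "E (lo - 1) \<longleftrightarrow> lo - 1 = i0" using u lo by auto
      have e4: "E hi \<longleftrightarrow> hi = i0" using u by auto
      show ?thesis unfolding e1 e2 e3 e4 using i0 lo by auto
    qed
  next
    case False
    then show "of_bool ((\<exists>i\<in>{lo..hi}. E i) \<noteq> (\<exists>i\<in>{lo - 1..hi - 1}. E i)) = (of_bool (E (lo - 1) \<noteq> E hi) :: bit)"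
      using lo by auto
  qed
qed

definition NN :: "nat \<Rightarrow> nat" where "NN m = 2 * m * m"
definition SS :: "nat \<Rightarrow> nat" where "SS m = 2 * m + 1"

lemma mod_ge: "n \<le> x \<Longrightarrow> x < 2 * n \<Longrightarrow> x mod n = x - n" for x n :: nat
  by (simp add: le_mod_geq)

context
  fixes m :: nat
  assumes m2: "2 \<le> m"
begin

lemma NN_pos: "NN m > 0" using m2 by (simp add: NN_def)
lemma SS_lt: "SS m < NN m"
proof -
  obtain k where k: "m = k + 2" using m2 by (metis add.commute le_Suc_ex)
  show ?thesis unfolding NN_def SS_def k by (simp add: algebra_simps)
qed
lemma m_lt: "m + 1 < NN m" using SS_lt by (simp add: SS_def)
lemma twom_lt: "2 * m - 1 < NN m" using SS_lt by (simp add: SS_def)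

lemma cop: "coprime (SS m) (NN m)"
proof -
  have "gcd m (2 * m + 1) = 1" using gcd_add_mult[of m 2 1] by simp
  then have "coprime m (2 * m + 1)" by (simp add: coprime_iff_gcd_eq_1)
  then have "coprime (2 * m + 1) m" by (rule coprime_commute[THEN iffD1])
  moreover have "coprime (2 * m + 1) 2" by simp
  ultimately have "coprime (2 * m + 1) (2 * m * m)"
    by (simp add: coprime_mult_right_iff)
  then show ?thesis by (simp add: NN_def SS_def)
qed

lemma ar1: "(m * SS m) mod NN m = m"
proof -
  have "m * SS m = NN m + m" by (simp add: NN_def SS_def algebra_simps)
  then show ?thesis using m_lt by simp
qed

lemma ar2: "(m + 1 + (m - 1) * SS m) mod NN m = 0"
proof -
  obtain k where k: "m = k + 1" using m2 by (metis add.commute le_Suc_ex le_trans one_le_numeral)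
  have "m + 1 + (m - 1) * SS m = NN m" unfolding NN_def SS_def k by (simp add: algebra_simps)
  then show ?thesis by simp
qed

lemma ar3: "(1 + (2 * m - 1) * SS m) mod NN m = 0"
proof -
  obtain k where k: "m = k + 1" using m2 by (metis add.commute le_Suc_ex le_trans one_le_numeral)
  have "1 + (2 * m - 1) * SS m = 2 * NN m" unfolding NN_def SS_def k by (simp add: algebra_simps)
  then show ?thesis by simp
qed

abbreviation "nA \<equiv> NN m"
abbreviation "sA \<equiv> SS m"

definition a1 where "a1 = {1..m}"
definition b1 where "b1 = prog nA sA 0 1 m"
definition a2 where "a2 = {1..m+1}"
definition b2 where "b2 = prog nA sA (m + 1) 1 (m - 1)"
definition a3 where "a3 = {1..1::nat}"
definition b3 where "b3 = prog nA sA 1 1 (2 * m - 1)"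

lemma coc1: "coc (int sA) (vec nA a1) (vec nA b1)"
  unfolding coc_def
proof
  fix k
  have i: "vec nA a1 k + vec nA a1 (k + 1) = delta nA 0 k + delta nA (int m) k"
    unfolding a1_def using interval_step[of 1 m nA k] m2 m_lt by simp
  have p: "vec nA b1 k + vec nA b1 (k + int sA) = delta nA 0 k + delta nA (int m) k"
    unfolding b1_def using prog_step[OF NN_pos cop, of 1 m 0 k] m2 m_lt ar1 by (simp add: mult.commute)
  show "vec nA a1 k + vec nA a1 (k + 1) + vec nA b1 k + vec nA b1 (k + int sA) = 0"
    using i p by (metis add.assoc bit_add_self)
qed

lemma coc2: "coc (int sA) (vec nA a2) (vec nA b2)"
  unfolding coc_def
proof
  fix k
  have i: "vec nA a2 k + vec nA a2 (k + 1) = delta nA 0 k + delta nA (int (m + 1)) k"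
    unfolding a2_def using interval_step[of 1 "m+1" nA k] m2 m_lt by simp
  have p: "vec nA b2 k + vec nA b2 (k + int sA) = delta nA (int (m + 1)) k + delta nA 0 k"
    unfolding b2_def using prog_step[OF NN_pos cop, of 1 "m - 1" "m + 1" k] m2 m_lt ar2 by simp
  show "vec nA a2 k + vec nA a2 (k + 1) + vec nA b2 k + vec nA b2 (k + int sA) = 0"
    using i p by (metis add.assoc add.commute bit_add_self)
qed

lemma coc3: "coc (int sA) (vec nA a3) (vec nA b3)"
  unfolding coc_def
proof
  fix k
  have i: "vec nA a3 k + vec nA a3 (k + 1) = delta nA 0 k + delta nA 1 k"
    unfolding a3_def using interval_step[of 1 1 nA k] m_lt by simp
  have p: "vec nA b3 k + vec nA b3 (k + int sA) = delta nA 1 k + delta nA 0 k"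
    unfolding b3_def using prog_step[OF NN_pos cop, of 1 "2 * m - 1" 1 k] m2 twom_lt ar3 by simp
  show "vec nA a3 k + vec nA a3 (k + 1) + vec nA b3 k + vec nA b3 (k + int sA) = 0"
    using i p by (metis add.assoc add.commute bit_add_self)
qed

lemma h1: assumes "i \<le> m - 1" shows "i * sA + m < nA"
proof -
  obtain k where k: "m = k + 2" using m2 by (metis add.commute le_Suc_ex)
  have "i * sA \<le> (m - 1) * sA" using assms by (rule mult_le_mono1)
  moreover have "(m - 1) * sA + m < nA" unfolding NN_def SS_def k by (simp add: algebra_simps)
  ultimately show ?thesis by linarith
qed

lemma h2: assumes "i \<le> m - 2" shows "m + 1 + i * sA < nA"
proof -
  obtain k where k: "m = k + 2" using m2 by (metis add.commute le_Suc_ex)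
  have "i * sA \<le> (m - 2) * sA" using assms by (rule mult_le_mono1)
  moreover have "m + 1 + (m - 2) * sA < nA" unfolding NN_def SS_def k by (simp add: algebra_simps)
  ultimately show ?thesis by linarith
qed

lemma h3: assumes "m + 1 \<le> i" "i \<le> 2 * m - 2"
  shows "nA \<le> 1 + i * sA" "1 + i * sA < 2 * nA" "sA \<le> 1 + i * sA - nA"
proof -
  obtain k where k: "m = k + 2" using m2 by (metis add.commute le_Suc_ex)
  have lo: "(m + 1) * sA \<le> i * sA" using assms by (intro mult_le_mono1)
  have hi: "i * sA \<le> (2 * m - 2) * sA" using assms by (intro mult_le_mono1)
  have e1: "nA + sA \<le> 1 + (m + 1) * sA" unfolding NN_def SS_def k by (simp add: algebra_simps)
  have e2: "1 + (2 * m - 2) * sA < 2 * nA" unfolding NN_def SS_def k by (simp add: algebra_simps)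
  show "nA \<le> 1 + i * sA" using lo e1 by linarith
  show "1 + i * sA < 2 * nA" using hi e2 by linarith
  show "sA \<le> 1 + i * sA - nA" using lo e1 by linarith
qed

lemma h4: "1 + m * sA = nA + (m + 1)" by (simp add: NN_def SS_def algebra_simps)

lemma h5: "(1 + m * sA) mod nA = m + 1"
proof -
  have "(1 + m * sA) mod nA = (nA + (m + 1)) mod nA" by (simp only: h4)
  also have "\<dots> = (m + 1) mod nA" by (rule mod_add_self1)
  also have "\<dots> = m + 1" using m_lt by (rule mod_less)
  finally show ?thesis .
qed

lemma s_le_is: "1 \<le> i \<Longrightarrow> sA \<le> i * sA" by simp

lemma win1: "x \<in> b1 \<and> x < sA \<longleftrightarrow> x = m"
proof
  assume h: "x \<in> b1 \<and> x < sA"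
  then obtain i where i: "i \<in> {1..m}" "x = (0 + i * sA) mod nA" unfolding b1_def prog_def by auto
  show "x = m"
  proof (cases "i = m")
    case True then show ?thesis using i ar1 by (simp add: mult.commute)
  next
    case False
    then have "i \<le> m - 1" using i by auto
    then have "i * sA < nA" using h1 by fastforce
    then have "x = i * sA" using i by simp
    then show ?thesis using h s_le_is[of i] i by auto
  qed
next
  assume "x = m"
  moreover have "m = (0 + m * sA) mod nA" using ar1 by (simp add: mult.commute)
  ultimately show "x \<in> b1 \<and> x < sA" unfolding b1_def prog_def using m2 by (auto simp: SS_def)
qed

lemma win2: "x \<in> b2 \<and> x < sA \<longleftrightarrow> x = 0"
proof
  assume h: "x \<in> b2 \<and> x < sA"
  then obtain i where i: "i \<in> {1..m - 1}" "x = (m + 1 + i * sA) mod nA" unfolding b2_def prog_def by auto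
  show "x = 0"
  proof (cases "i = m - 1")
    case True then show ?thesis using i ar2 by simp
  next
    case False
    then have "i \<le> m - 2" using i by auto
    then have "m + 1 + i * sA < nA" using h2 by blast
    then have "x = m + 1 + i * sA" using i by simp
    moreover have "sA \<le> i * sA" using i by simp
    ultimately show ?thesis using h by linarith
  qed
next
  assume x: "x = 0"
  have "0 \<in> prog nA sA (m + 1) 1 (m - 1)" unfolding prog_def
    by (rule image_eqI[where x = "m - 1"]) (use ar2 m2 in auto)
  then show "x \<in> b2 \<and> x < sA" unfolding b2_def x by (simp add: SS_def)
qed

lemma win3: "x \<in> b3 \<and> x < sA \<longleftrightarrow> x = 0 \<or> x = m + 1"
proof
  assume h: "x \<in> b3 \<and> x < sA"
  then obtain i where i: "i \<in> {1..2 * m - 1}" "x = (1 + i * sA) mod nA" unfolding b3_def prog_def by auto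
  have i12: "1 \<le> i" "i \<le> 2 * m - 1" using i by auto
  have disj: "i \<le> m - 1 \<or> i = m \<or> (m + 1 \<le> i \<and> i \<le> 2 * m - 2) \<or> i = 2 * m - 1" using i12 m2 by arith
  consider "i \<le> m - 1" | "i = m" | "m + 1 \<le> i \<and> i \<le> 2 * m - 2" | "i = 2 * m - 1" using disj by blast
  then show "x = 0 \<or> x = m + 1"
  proof cases
    case 1
    then have "1 + i * sA < nA" using h1[OF 1] m2 by linarith
    then have "x = 1 + i * sA" using i by simp
    moreover have "sA \<le> i * sA" using i12 by simp
    ultimately have False using h by linarith
    then show ?thesis ..
  next
    case 2
    then have "x = (nA + (m + 1)) mod nA" using i h4 by simp
    also have "\<dots> = (m + 1) mod nA" by (rule mod_add_self1)
    also have "\<dots> = m + 1" using m_lt by (rule mod_less)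
    finally show ?thesis by simp
  next
    case 3
    then have "x = 1 + i * sA - nA" using i h3[of i] mod_ge by auto
    then show ?thesis using h h3[of i] 3 by auto
  next
    case 4
    then show ?thesis using i ar3 by simp
  qed
next
  assume h: "x = 0 \<or> x = m + 1"
  have r: "1 \<le> 2 * m - 1" "m \<in> {1..2 * m - 1}" "2 * m - 1 \<in> {1..2 * m - 1}" using m2 by auto
  have "0 \<in> prog nA sA 1 1 (2 * m - 1)" unfolding prog_def
    by (rule image_eqI[where x = "2 * m - 1"]) (use ar3 r in auto)
  moreover have "m + 1 \<in> prog nA sA 1 1 (2 * m - 1)" unfolding prog_def
    by (rule image_eqI[where x = "m"]) (use h5 r in auto)
  moreover have "0 < sA" "m + 1 < sA" using m2 by (auto simp: SS_def)
  ultimately show "x \<in> b3 \<and> x < sA" using h unfolding b3_def by auto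
qed

lemma cardw1: "card (b1 \<inter> {0..<sA}) = 1"
proof -
  have "b1 \<inter> {0..<sA} = {m}"
  proof (rule set_eqI)
    fix x show "x \<in> b1 \<inter> {0..<sA} \<longleftrightarrow> x \<in> {m}" using win1[of x] by auto
  qed
  then show ?thesis by simp
qed
lemma cardw2: "card (b2 \<inter> {0..<sA}) = 1"
proof -
  have "b2 \<inter> {0..<sA} = {0}"
  proof (rule set_eqI)
    fix x show "x \<in> b2 \<inter> {0..<sA} \<longleftrightarrow> x \<in> {0}" using win2[of x] by auto
  qed
  then show ?thesis by simp
qed
lemma cardw3: "card (b3 \<inter> {0..<sA}) = 2"
proof -
  have "b3 \<inter> {0..<sA} = {0, m + 1}"
  proof (rule set_eqI)
    fix x show "x \<in> b3 \<inter> {0..<sA} \<longleftrightarrow> x \<in> {0, m + 1}" using win3[of x] by auto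
  qed
  then show ?thesis by simp
qed

lemma cardb1: "card b1 = m" unfolding b1_def using prog_card[OF NN_pos cop, of m 0 1] m_lt by simp
lemma cardb2: "card b2 = m - 1" unfolding b2_def using prog_card[OF NN_pos cop, of "m - 1" "m + 1" 1] m_lt by simp
lemma cardb3: "card b3 = 2 * m - 1" unfolding b3_def using prog_card[OF NN_pos cop, of "2 * m - 1" 1 1] twom_lt by simp

lemma suba: "a1 \<subseteq> {0..<nA}" "a2 \<subseteq> {0..<nA}" "a3 \<subseteq> {0..<nA}"
  unfolding a1_def a2_def a3_def using m_lt by auto
lemma subb: "b1 \<subseteq> {0..<nA}" "b2 \<subseteq> {0..<nA}" "b3 \<subseteq> {0..<nA}"
  unfolding b1_def b2_def b3_def using prog_sub[OF NN_pos] by auto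

lemma taus: "tau nA a1 = 2" "tau nA a2 = 2" "tau nA a3 = 2"
proof -
  show "tau nA a1 = 2" unfolding a1_def by (rule interval_tau) (use m_lt m2 in auto)
  show "tau nA a2 = 2" unfolding a2_def by (rule interval_tau) (use m_lt m2 in auto)
  show "tau nA a3 = 2" unfolding a3_def by (rule interval_tau) (use m_lt m2 in auto)
qed

lemma cards_a: "card a1 = m" "card a2 = m + 1" "card a3 = 1"
  unfolding a1_def a2_def a3_def by auto

lemma a0: "vec nA a1 0 = 0" "vec nA a2 0 = 0" "vec nA a3 0 = 0"
  unfolding a1_def a2_def a3_def vec_def by auto

end

lemma comb:
  fixes m U V J :: nat
  assumes m: "2 \<le> m" and A: "2*m*m \<le> (m+1)*U + (m-1)*V + 2*J" and B: "2*m*m \<le> U + (2*m-1)*V + 2*J"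
  shows "2*m \<le> U + V + J"
proof -
  obtain k where k: "m = k + 2" using m by (metis add.commute le_Suc_ex)
  have A': "2*(k+2)*(k+2) \<le> (k+3)*U + (k+1)*V + 2*J" using A unfolding k by (simp add: algebra_simps)
  have B': "2*(k+2)*(k+2) \<le> U + (2*k+3)*V + 2*J" using B unfolding k by (simp add: algebra_simps)
  have "(k+1)*(2*(k+2)*(k+2)) \<le> (k+1)*((k+3)*U + (k+1)*V + 2*J)" using A' by (rule mult_left_mono) simp
  then have "(k+1)*(2*(k+2)*(k+2)) + 2*(k+2)*(k+2) \<le> (k+1)*((k+3)*U + (k+1)*V + 2*J) + (U + (2*k+3)*V + 2*J)"
    using B' by linarith
  also have "\<dots> = (k+2)*(k+2)*U + (k+2)*(k+2)*V + 2*(k+2)*J" by (simp add: algebra_simps)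
  also have "\<dots> \<le> (k+2)*(k+2)*U + (k+2)*(k+2)*V + (k+2)*(k+2)*J"
  proof -
    have "2*(k+2) \<le> (k+2)*(k+2)" by simp
    then have "2*(k+2)*J \<le> (k+2)*(k+2)*J" by (rule mult_right_mono) simp
    then show ?thesis by linarith
  qed
  also have "\<dots> = (k+2)*(k+2)*(U+V+J)" by (simp add: algebra_simps)
  finally have "(k+2)*(k+2)*(2*(k+2)) \<le> (k+2)*(k+2)*(U+V+J)" by (simp add: algebra_simps)
  then have "2*(k+2) \<le> U+V+J" by (simp only: mult_le_cancel1) simp
  then show ?thesis unfolding k .
qed

lemma comb1:
  fixes m U V J :: nat
  assumes m: "2 \<le> m" and A: "2*m*m \<le> m*U + m*V + 2*J"
  shows "2*m \<le> U + V + J"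
proof -
  have "2*J \<le> m*J" using m by (rule mult_right_mono) simp
  moreover have "m*(2*m) = 2*m*m" "m*(U+V+J) = m*U+m*V+m*J" by (simp_all add: algebra_simps)
  ultimately have "m*(2*m) \<le> m*(U+V+J)" using A by linarith
  then show ?thesis using m by simp
qed

lemma sum_window:
  fixes s n :: nat and b :: "nat set"
  assumes "s \<le> n" "b \<subseteq> {0..<n}"
  shows "(\<Sum>k\<in>{0..<int s}. vec n b k) = of_nat (card (b \<inter> {0..<s}))"
proof -
  have "(\<Sum>k\<in>{0..<int s}. vec n b k) = (\<Sum>k\<in>int ` {0..<s}. vec n b k)"
    by (simp add: image_int_atLeastLessThan)
  also have "\<dots> = (\<Sum>k\<in>{0..<s}. vec n b (int k))" by (subst sum.reindex) auto
  also have "\<dots> = (\<Sum>k\<in>{0..<s}. of_bool (k \<in> b))"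
    by (rule sum.cong) (use assms in \<open>auto simp: vec_nat\<close>)
  also have "\<dots> = of_nat (card ({0..<s} \<inter> {k. k \<in> b}))" by (simp only: sum_of_bool_eq finite_atLeastLessThan)
  also have "{0..<s} \<inter> {k. k \<in> b} = b \<inter> {0..<s}" by auto
  finally show ?thesis .
qed

lemma S_vec: assumes "b \<subseteq> {0..<n}" shows "S n (vec n b) = of_nat (card b)"
proof -
  have "S n (\<lambda>k. vec n b k * 1) = (\<Sum>k\<in>b. 1)" by (rule S_vec_mult[OF assms])
  then show ?thesis by (simp only: mult_1_right card_bit)
qed

lemma vec_shift_n: "vec n p (k + int n) = vec n p k" "vec n p (k - int n) = vec n p k"
  by (simp_all add: vec_def)

context
  fixes m :: nat
  assumes m2: "2 \<le> m"
begin

abbreviation "nB \<equiv> NN m"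
abbreviation "sB \<equiv> SS m"

lemma bin1: "radd (rone nB) (xpow nB 1) = {0, 1}"
  using binom_xpow[of 1 nB] m_lt[OF m2] by simp
lemma bins: "radd (rone nB) (xpow nB (2 * m + 1)) = {0, sB}"
  using binom_xpow[of "2 * m + 1" nB] SS_lt[OF m2] by (simp add: SS_def)
lemma bini1: "radd (rone nB) (xinvpow nB 1) = {0, nB - 1}"
  using binom_xinvpow[of 1 nB] m_lt[OF m2] by simp
lemma binis: "radd (rone nB) (xinvpow nB (2 * m + 1)) = {0, nB - sB}"
  using binom_xinvpow[of "2 * m + 1" nB] SS_lt[OF m2] by (simp add: SS_def)

lemma vr1: "p \<subseteq> {0..<nB} \<Longrightarrow> vec nB (rmul nB p {0, 1}) k = vec nB p k + vec nB p (k - 1)"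
  using vec_rmul_binom[of p nB 1 k] m_lt[OF m2] by simp
lemma vrs: "p \<subseteq> {0..<nB} \<Longrightarrow> vec nB (rmul nB p {0, sB}) k = vec nB p k + vec nB p (k - int sB)"
  using vec_rmul_binom[of p nB sB k] SS_lt[OF m2] by (simp add: SS_def)
lemma vri1: "p \<subseteq> {0..<nB} \<Longrightarrow> vec nB (rmul nB p {0, nB - 1}) k = vec nB p k + vec nB p (k + 1)"
proof -
  assume p: "p \<subseteq> {0..<nB}"
  have "vec nB (rmul nB p {0, nB - 1}) k = vec nB p k + vec nB p (k - int (nB - 1))"
    using vec_rmul_binom[OF p, of "nB - 1" k] m_lt[OF m2] by simp
  also have "k - int (nB - 1) = k + 1 - int nB" using m_lt[OF m2] by simp
  finally show ?thesis using vec_shift_n(2)[of nB p "k + 1"] by simp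
qed
lemma vris: "p \<subseteq> {0..<nB} \<Longrightarrow> vec nB (rmul nB p {0, nB - sB}) k = vec nB p k + vec nB p (k + int sB)"
proof -
  assume p: "p \<subseteq> {0..<nB}"
  have "vec nB (rmul nB p {0, nB - sB}) k = vec nB p k + vec nB p (k - int (nB - sB))"
    using vec_rmul_binom[OF p, of "nB - sB" k] SS_lt[OF m2] by (simp add: SS_def)
  also have "k - int (nB - sB) = k + int sB - int nB" using SS_lt[OF m2] by simp
  finally show ?thesis using vec_shift_n(2)[of nB p "k + int sB"] by simp
qed

lemma C1_iff:
  "(u, v) \<in> C1 nB (2 * m) \<longleftrightarrow> u \<subseteq> {0..<nB} \<and> v \<subseteq> {0..<nB} \<and> cyc (int sB) (vec nB u) (vec nB v)"
proof -
  have "(u, v) \<in> C1 nB (2 * m) \<longleftrightarrow> u \<subseteq> {0..<nB} \<and> v \<subseteq> {0..<nB} \<and>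
      radd (rmul nB u {0, sB}) (rmul nB v {0, 1}) = {}"
    unfolding C1_def Rn_def bins bin1 by auto
  also have "\<dots> \<longleftrightarrow> u \<subseteq> {0..<nB} \<and> v \<subseteq> {0..<nB} \<and> cyc (int sB) (vec nB u) (vec nB v)"
  proof (intro conj_cong refl)
    assume u: "u \<subseteq> {0..<nB}" and v: "v \<subseteq> {0..<nB}"
    have "radd (rmul nB u {0, sB}) (rmul nB v {0, 1}) = {} \<longleftrightarrow>
        (\<forall>k. vec nB (radd (rmul nB u {0, sB}) (rmul nB v {0, 1})) k = 0)"
      by (rule vec_empty_iff) (intro radd_sub rmul_sub)
    also have "\<dots> \<longleftrightarrow> cyc (int sB) (vec nB u) (vec nB v)"
      unfolding cyc_def vec_radd vrs[OF u] vr1[OF v] by (simp only: add.assoc)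
    finally show "radd (rmul nB u {0, sB}) (rmul nB v {0, 1}) = {} \<longleftrightarrow> cyc (int sB) (vec nB u) (vec nB v)" .
  qed
  finally show ?thesis .
qed

lemma C2_of_fun:
  assumes u: "u \<subseteq> {0..<nB}" and v: "v \<subseteq> {0..<nB}" and C: "per nB C"
    and U: "\<And>k. vec nB u k = C k + C (k - 1)" and V: "\<And>k. vec nB v k = C k + C (k - int sB)"
  shows "(u, v) \<in> C2 nB (2 * m)"
proof -
  let ?c = "set_of nB C"
  have c: "?c \<subseteq> {0..<nB}" by (rule set_of_sub)
  have vc: "\<And>k. vec nB ?c k = C k" using vec_set_of[OF NN_pos[OF m2] C] by blast
  have "u = rmul nB ?c {0, 1}"
    by (rule vec_inj[OF u rmul_sub]) (simp only: vr1[OF c] vc U)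
  moreover have "v = rmul nB ?c {0, sB}"
    by (rule vec_inj[OF v rmul_sub]) (simp only: vrs[OF c] vc V)
  ultimately show ?thesis unfolding C2_def Rn_def bins bin1 using c by auto
qed

lemma C2_to_fun:
  assumes "(u, v) \<in> C2 nB (2 * m)"
  shows "\<exists>C. per nB C \<and> (\<forall>k. vec nB u k = C k + C (k - 1)) \<and> (\<forall>k. vec nB v k = C k + C (k - int sB))"
proof -
  obtain c where c: "c \<subseteq> {0..<nB}" "u = rmul nB c {0, 1}" "v = rmul nB c {0, sB}"
    using assms unfolding C2_def Rn_def bins bin1 by auto
  show ?thesis
    using per_vec vr1[OF c(1)] vrs[OF c(1)] unfolding c(2,3) by blast
qed

end

lemma bitcase: "\<not> (p = 0 \<and> w = 0) \<Longrightarrow> p + w * M \<noteq> 1 \<Longrightarrow> p + w * (M + 1) = 1 \<and> w = (1::bit)"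
  by (cases p; cases w; cases M) auto

context
  fixes m :: nat
  assumes m2: "2 \<le> m"
begin

abbreviation "nC \<equiv> NN m"
abbreviation "sC \<equiv> SS m"

lemma X_bound:
  assumes j: "j \<subseteq> {0..<nC}" and u: "u \<subseteq> {0..<nC}" and v: "v \<subseteq> {0..<nC}"
    and inC1: "(radd u (rmul nC j (radd (rone nC) (xpow nC 1))), v) \<in> C1 nC (2 * m)"
    and nC2: "(radd u (rmul nC j (radd (rone nC) (xpow nC 1))), v) \<notin> C2 nC (2 * m)"
  shows "2 * m \<le> card j + card u + card v"
proof -
  have n0: "nC > 0" by (rule NN_pos[OF m2])
  have sl: "0 < int sC" "int sC < int nC" using SS_lt[OF m2] by (auto simp: SS_def)
  define u' where "u' = radd u (rmul nC j {0, 1})"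
  have u'eq: "radd u (rmul nC j (radd (rone nC) (xpow nC 1))) = u'" unfolding u'_def bin1[OF m2] ..
  have u'sub: "u' \<subseteq> {0..<nC}" unfolding u'_def by (intro radd_sub u rmul_sub)
  define U where "U = (\<lambda>k. vec nC u k + vec nC j k + vec nC j (k - 1))"
  have vU: "vec nC u' = U"
    unfolding U_def u'_def by (rule ext) (simp only: vec_radd vr1[OF m2 j] add.assoc)
  have pU: "per nC U" unfolding vU[symmetric] by (rule per_vec)
  have pV: "per nC (vec nC v)" by (rule per_vec)
  have cy: "cyc (int sC) U (vec nC v)"
    using inC1 unfolding u'eq C1_iff[OF m2] vU by blast
  obtain C p w where C: "per nC C" and UC: "\<And>k. U k = C k + C (k - 1) + p * delta nC 0 k"
      and VC: "\<And>k. vec nC v k = C k + C (k - int sC) + w + p * Ind nC (int sC) k"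
    using L3[OF n0 sl pU pV cy] by blast
  have pw: "\<not> (p = 0 \<and> w = 0)"
  proof
    assume h: "p = 0 \<and> w = 0"
    have "(u', v) \<in> C2 nC (2 * m)"
    proof (rule C2_of_fun[OF m2 u'sub v C])
      fix k
      show "vec nC u' k = C k + C (k - 1)" using UC[of k] h unfolding vU by simp
      show "vec nC v k = C k + C (k - int sC)" using VC[of k] h by simp
    qed
    then show False using nC2 unfolding u'eq by blast
  qed
  have Pf: "pr nC U (vec nC v) (\<lambda>k. vec nC a (k - int t)) (\<lambda>k. vec nC b (k - int t)) =
      p * of_nat (card (b \<inter> {0..<sC})) + w * of_nat (card b)"
    if cc: "coc (int sC) (vec nC a) (vec nC b)" and a0: "vec nC a 0 = 0" and b: "b \<subseteq> {0..<nC}" for a b t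
  proof -
    have "pr nC U (vec nC v) (\<lambda>k. vec nC a (k - int t)) (\<lambda>k. vec nC b (k - int t)) = pr nC U (vec nC v) (vec nC a) (vec nC b)"
      by (rule L2_iter[OF n0 pU pV per_vec per_vec cc cy])
    also have "\<dots> = p * (vec nC a 0 + (\<Sum>k\<in>{0..<int sC}. vec nC b k)) + w * S nC (vec nC b)"
      by (rule L5[OF n0 sl per_vec per_vec cc C UC VC])
    also have "\<dots> = p * of_nat (card (b \<inter> {0..<sC})) + w * of_nat (card b)"
      using sum_window[of sC nC b] SS_lt[OF m2] b a0 S_vec[OF b] by simp
    finally show ?thesis .
  qed
  let ?M = "of_nat m :: bit"
  have P1: "\<And>t. pr nC U (vec nC v) (\<lambda>k. vec nC (a1 m) (k - int t)) (\<lambda>k. vec nC (b1 m) (k - int t)) = p + w * ?M"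
    using Pf[OF coc1[OF m2] a0(1)[OF m2] subb(1)[OF m2]] cardw1[OF m2] cardb1[OF m2] by simp
  have P2: "\<And>t. pr nC U (vec nC v) (\<lambda>k. vec nC (a2 m) (k - int t)) (\<lambda>k. vec nC (b2 m) (k - int t)) = p + w * (?M + 1)"
  proof -
    have "(of_nat (m - 1) :: bit) = ?M + 1" using m2 by (simp add: of_nat_diff)
    then show "\<And>t. ?thesis t"
      using Pf[OF coc2[OF m2] a0(2)[OF m2] subb(2)[OF m2]] cardw2[OF m2] cardb2[OF m2] by simp
  qed
  have P3: "\<And>t. pr nC U (vec nC v) (\<lambda>k. vec nC a3 (k - int t)) (\<lambda>k. vec nC (b3 m) (k - int t)) = w"
  proof -
    have "(of_nat (2 * m - 1) :: bit) = 1" using m2 by (simp add: of_nat_diff)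
    moreover have "(of_nat 2 :: bit) = 0" by simp
    ultimately show "\<And>t. ?thesis t"
      using Pf[OF coc3[OF m2] a0(3)[OF m2] subb(3)[OF m2]] cardw3[OF m2] cardb3[OF m2] by simp
  qed
  have cb: "nC \<le> card a * card u + card b * card v + tau nC a * card j"
    if "a \<subseteq> {0..<nC}" "b \<subseteq> {0..<nC}"
      and "\<And>t. pr nC U (vec nC v) (\<lambda>k. vec nC a (k - int t)) (\<lambda>k. vec nC b (k - int t)) = 1" for a b
    using count_bound[OF n0 that(1,2) u v j] that(3) unfolding U_def by blast
  show ?thesis
  proof (cases "p + w * ?M = 1")
    case True
    have "nC \<le> m * card u + m * card v + 2 * card j"
      using cb[OF suba(1)[OF m2] subb(1)[OF m2]] P1 True taus[OF m2] cards_a[OF m2] cardb1[OF m2] by simp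
    then have "2 * m \<le> card u + card v + card j" using comb1[OF m2] by (simp add: NN_def)
    then show ?thesis by simp
  next
    case False
    from bitcase[OF pw False] have pw1: "p + w * (?M + 1) = 1" "w = 1" by auto
    have A: "nC \<le> (m + 1) * card u + (m - 1) * card v + 2 * card j"
      using cb[OF suba(2)[OF m2] subb(2)[OF m2]] P2 pw1 taus[OF m2] cards_a[OF m2] cardb2[OF m2] by simp
    have B: "nC \<le> card u + (2 * m - 1) * card v + 2 * card j"
      using cb[OF suba(3)[OF m2] subb(3)[OF m2]] P3 pw1 taus[OF m2] cards_a[OF m2] cardb3[OF m2] by simp
    have "2 * m \<le> card u + card v + card j" using comb[OF m2] A B by (simp add: NN_def)
    then show ?thesis by simp
  qed
qed

end

definition rflx :: "nat \<Rightarrow> nat set \<Rightarrow> nat set" where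
  "rflx n p = (\<lambda>k. (n - k) mod n) ` p"

lemma rflx_sub: "n > 0 \<Longrightarrow> rflx n p \<subseteq> {0..<n}" by (auto simp: rflx_def)

lemma invol:
  fixes n x r :: nat
  assumes "x < n" "r < n"
  shows "r = (n - x) mod n \<longleftrightarrow> x = (n - r) mod n"
proof (cases "x = 0")
  case True
  show ?thesis
  proof (cases "r = 0")
    case False
    then have "(n - r) mod n = n - r" using assms by simp
    then show ?thesis using True False assms by auto
  qed (use True assms in auto)
next
  case False
  then have a: "(n - x) mod n = n - x" using assms by simp
  show ?thesis
  proof (cases "r = 0")
    case True then show ?thesis using a False assms by auto
  next
    case False
    then have "(n - r) mod n = n - r" using assms by simp
    then show ?thesis using a assms by auto
  qed
qed

lemma card_rflx:
  assumes p: "p \<subseteq> {0..<n}" shows "card (rflx n p) = card p"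
proof -
  have "inj_on (\<lambda>k. (n - k) mod n) p"
  proof (rule inj_onI)
    fix x y assume xy: "x \<in> p" "y \<in> p" "(n - x) mod n = (n - y) mod n"
    have "x < n" "y < n" using xy p by auto
    moreover have "(n - y) mod n < n" using \<open>y < n\<close> by simp
    ultimately show "x = y" using invol[of x n "(n - y) mod n"] invol[of y n "(n - y) mod n"] xy(3) by auto
  qed
  then show ?thesis unfolding rflx_def by (rule card_image)
qed

lemma vec_rflx:
  assumes p: "p \<subseteq> {0..<n}" and n: "n > 0"
  shows "vec n (rflx n p) k = vec n p (- k)"
proof -
  define r where "r = nat (k mod int n)"
  have r: "r < n" "int r = k mod int n" using n by (auto simp: r_def nat_less_iff)
  have nk: "nat ((- k) mod int n) = (n - r) mod n"
  proof -
    have "(- k) mod int n = (- (k mod int n)) mod int n" by (simp add: mod_minus_eq)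
    also have "\<dots> = (int n - int r) mod int n" using r by (simp add: mod_diff_left_eq[symmetric])
    also have "\<dots> = int ((n - r) mod n)" using r by (simp add: of_nat_diff zmod_int)
    finally show ?thesis by simp
  qed
  have "r \<in> rflx n p \<longleftrightarrow> (n - r) mod n \<in> p"
  proof
    assume "r \<in> rflx n p"
    then obtain x where x: "x \<in> p" "r = (n - x) mod n" unfolding rflx_def by auto
    then have "x = (n - r) mod n" using invol[of x n r] p r by auto
    then show "(n - r) mod n \<in> p" using x by simp
  next
    assume h: "(n - r) mod n \<in> p"
    have "r = (n - (n - r) mod n) mod n" using invol[of "(n - r) mod n" n r] r n by simp
    then show "r \<in> rflx n p" unfolding rflx_def using h by blast
  qed
  then show ?thesis unfolding vec_def r_def[symmetric] nk by simp
qed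

context
  fixes m :: nat
  assumes m2: "2 \<le> m"
begin

abbreviation "nD \<equiv> NN m"
abbreviation "sD \<equiv> SS m"

lemma C1'_iff:
  "(u, v) \<in> C1' nD (2 * m) \<longleftrightarrow> u \<subseteq> {0..<nD} \<and> v \<subseteq> {0..<nD} \<and>
     (\<forall>k. vec nD u k + vec nD u (k + 1) + vec nD v k + vec nD v (k + int sD) = 0)"
proof -
  have "(u, v) \<in> C1' nD (2 * m) \<longleftrightarrow> u \<subseteq> {0..<nD} \<and> v \<subseteq> {0..<nD} \<and>
      radd (rmul nD u {0, nD - 1}) (rmul nD v {0, nD - sD}) = {}"
    unfolding C1'_def Rn_def binis[OF m2] bini1[OF m2] by auto
  also have "\<dots> \<longleftrightarrow> u \<subseteq> {0..<nD} \<and> v \<subseteq> {0..<nD} \<and>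
     (\<forall>k. vec nD u k + vec nD u (k + 1) + vec nD v k + vec nD v (k + int sD) = 0)"
  proof (intro conj_cong refl)
    assume u: "u \<subseteq> {0..<nD}" and v: "v \<subseteq> {0..<nD}"
    have "radd (rmul nD u {0, nD - 1}) (rmul nD v {0, nD - sD}) = {} \<longleftrightarrow>
        (\<forall>k. vec nD (radd (rmul nD u {0, nD - 1}) (rmul nD v {0, nD - sD})) k = 0)"
      by (rule vec_empty_iff) (intro radd_sub rmul_sub)
    also have "\<dots> \<longleftrightarrow> (\<forall>k. vec nD u k + vec nD u (k + 1) + vec nD v k + vec nD v (k + int sD) = 0)"
      unfolding vec_radd vri1[OF m2 u] vris[OF m2 v] by (simp only: add.assoc)
    finally show "radd (rmul nD u {0, nD - 1}) (rmul nD v {0, nD - sD}) = {} \<longleftrightarrow>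
        (\<forall>k. vec nD u k + vec nD u (k + 1) + vec nD v k + vec nD v (k + int sD) = 0)" .
  qed
  finally show ?thesis .
qed

lemma C2'_of_fun:
  assumes u: "u \<subseteq> {0..<nD}" and v: "v \<subseteq> {0..<nD}" and C: "per nD C"
    and U: "\<And>k. vec nD u k = C k + C (k + int sD)" and V: "\<And>k. vec nD v k = C k + C (k + 1)"
  shows "(u, v) \<in> C2' nD (2 * m)"
proof -
  let ?c = "set_of nD C"
  have c: "?c \<subseteq> {0..<nD}" by (rule set_of_sub)
  have vc: "\<And>k. vec nD ?c k = C k" using vec_set_of[OF NN_pos[OF m2] C] by blast
  have "u = rmul nD ?c {0, nD - sD}"
    by (rule vec_inj[OF u rmul_sub]) (simp only: vris[OF m2 c] vc U)
  moreover have "v = rmul nD ?c {0, nD - 1}"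
    by (rule vec_inj[OF v rmul_sub]) (simp only: vri1[OF m2 c] vc V)
  ultimately show ?thesis unfolding C2'_def Rn_def binis[OF m2] bini1[OF m2] using c by auto
qed

lemma bit8: "(a::bit) + b + c + d + e + f + g + h = 0 \<Longrightarrow> a = b + c + d + e + f + g + h"
  by (cases a; cases b; cases c; cases d; cases e; cases f; cases g; cases h) simp_all

lemma Z_bound:
  assumes j: "j \<subseteq> {0..<nD}" and u: "u \<subseteq> {0..<nD}" and v: "v \<subseteq> {0..<nD}"
    and inC1: "(radd u (rmul nD j (radd (rone nD) (xinvpow nD (2 * m + 1)))), v) \<in> C1' nD (2 * m)"
    and nC2: "(radd u (rmul nD j (radd (rone nD) (xinvpow nD (2 * m + 1)))), v) \<notin> C2' nD (2 * m)"
  shows "2 * m \<le> card j + card u + card v"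
proof -
  have n0: "nD > 0" by (rule NN_pos[OF m2])
  define X where "X = radd u (rmul nD j {0, nD - sD})"
  have Xeq: "radd u (rmul nD j (radd (rone nD) (xinvpow nD (2 * m + 1)))) = X"
    unfolding X_def binis[OF m2] ..
  have Xsub: "X \<subseteq> {0..<nD}" unfolding X_def by (intro radd_sub u rmul_sub)
  have vX: "\<And>k. vec nD X k = vec nD u k + vec nD j k + vec nD j (k + int sD)"
    unfolding X_def by (simp only: vec_radd vris[OF m2 j] add.assoc)
  let ?J = "vec nD j" and ?u = "vec nD u" and ?v = "vec nD v"
  have cX: "\<And>k. vec nD X k + vec nD X (k + 1) + ?v k + ?v (k + int sD) = 0"
    using inC1 unfolding Xeq C1'_iff by blast
  define u2 where "u2 = rflx nD v"
  define j2 where "j2 = rflx nD j"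
  define v2 where "v2 = rflx nD u"
  have subs: "u2 \<subseteq> {0..<nD}" "j2 \<subseteq> {0..<nD}" "v2 \<subseteq> {0..<nD}"
    unfolding u2_def j2_def v2_def by (intro rflx_sub n0)+
  have vu2: "\<And>k. vec nD u2 k = ?v (- k)" unfolding u2_def by (rule vec_rflx[OF v n0])
  have vj2: "\<And>k. vec nD j2 k = ?J (- k)" unfolding j2_def by (rule vec_rflx[OF j n0])
  have vv2: "\<And>k. vec nD v2 k = ?u (- k)" unfolding v2_def by (rule vec_rflx[OF u n0])
  define U2 where "U2 = radd u2 (rmul nD j2 {0, 1})"
  have U2eq: "radd u2 (rmul nD j2 (radd (rone nD) (xpow nD 1))) = U2" unfolding U2_def bin1[OF m2] ..
  have U2sub: "U2 \<subseteq> {0..<nD}" unfolding U2_def by (intro radd_sub subs rmul_sub)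
  have vU2: "\<And>k. vec nD U2 k = ?v (- k) + ?J (- k) + ?J (1 - k)"
  proof -
    fix k
    have "vec nD U2 k = vec nD u2 k + (vec nD j2 k + vec nD j2 (k - 1))"
      unfolding U2_def by (simp only: vec_radd vr1[OF m2 subs(2)])
    moreover have e: "- (k - 1) = 1 - k" by simp
    ultimately show "vec nD U2 k = ?v (- k) + ?J (- k) + ?J (1 - k)" unfolding vu2 vj2 e by (simp only: add.assoc)
  qed
  have inC1X: "(U2, v2) \<in> C1 nD (2 * m)"
    unfolding C1_iff[OF m2] cyc_def
  proof (intro conjI U2sub subs allI)
    fix k
    have h: "vec nD X (- k) + vec nD X (- k + 1) + ?v (- k) + ?v (- k + int sD) = 0" by (rule cX)
    have e1: "- k + 1 = 1 - k" "- k + int sD = int sD - k" "- (k - int sD) = int sD - k"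
      "1 - k + int sD = int sD - k + 1" "- (k - 1) = 1 - k" "1 - (k - int sD) = int sD - k + 1"
      "- k + 1 + int sD = int sD - k + 1" by simp_all
    have h2: "?u (- k) + ?J (- k) + ?J (int sD - k) + ?u (1 - k) + ?J (1 - k) + ?J (int sD - k + 1) + ?v (- k) + ?v (int sD - k) = 0"
      using h unfolding vX e1 by (simp only: add.assoc)
    show "vec nD U2 k + vec nD U2 (k - int sD) + vec nD v2 k + vec nD v2 (k - 1) = 0"
      unfolding vU2 vv2 e1 using h2 by (simp only: bring)
  qed
  have nC2X: "(U2, v2) \<notin> C2 nD (2 * m)"
  proof
    assume "(U2, v2) \<in> C2 nD (2 * m)"
    then obtain C where C: "per nD C" and UC: "\<And>k. vec nD U2 k = C k + C (k - 1)"
      and VC: "\<And>k. vec nD v2 k = C k + C (k - int sD)"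
      using C2_to_fun[OF m2] by blast
    define D where "D = (\<lambda>i. C (- i) + ?J i)"
    have pD: "per nD D"
    proof -
      have "per nD (\<lambda>i. C (- i))" using C unfolding per_def by (metis mod_minus_eq)
      then show ?thesis unfolding D_def by (rule per_add) (rule per_vec)
    qed
    have "(X, v) \<in> C2' nD (2 * m)"
    proof (rule C2'_of_fun[OF Xsub v pD])
      fix i
      have a: "?u i = C (- i) + C (- i - int sD)" using VC[of "- i"] unfolding vv2 by simp
      have e: "- (i + int sD) = - i - int sD" by simp
      show "vec nD X i = D i + D (i + int sD)" unfolding vX D_def a e by (simp only: bring)
      have b: "?v i + ?J i + ?J (1 + i) = C (- i) + C (- i - 1)" using UC[of "- i"] unfolding vU2 by simp
      have e2: "- (i + 1) = - i - 1" "1 + i = i + 1" by simp_all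
      show "?v i = D i + D (i + 1)" unfolding D_def e2(1) using b unfolding e2(2)
        by (metis (no_types, lifting) bring)
    qed
    then show False using nC2 unfolding Xeq by blast
  qed
  have "2 * m \<le> card j2 + card u2 + card v2"
    by (rule X_bound[OF m2 subs(2) subs(1) subs(3)]) (use inC1X nC2X U2eq in auto)
  then show ?thesis unfolding u2_def j2_def v2_def using card_rflx u v j by simp
qed

end

lemma delta_shift:
  assumes n: "n > 0" and x: "x < n"
  shows "delta n (int x) (k - int c) = delta n (int ((x + c) mod n)) k"
proof -
  have "((k - int c) mod int n = int x) \<longleftrightarrow> (k mod int n = int ((x + c) mod n))"
  proof
    assume h: "(k - int c) mod int n = int x"
    have "k mod int n = ((k - int c) mod int n + int c) mod int n" by (simp add: mod_add_left_eq)
    also have "\<dots> = (int x + int c) mod int n" using h by simp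
    finally show "k mod int n = int ((x + c) mod n)" by (simp add: zmod_int)
  next
    assume h: "k mod int n = int ((x + c) mod n)"
    have "(k - int c) mod int n = (k mod int n - int c) mod int n" by (simp add: mod_diff_left_eq)
    also have "\<dots> = ((int x + int c) mod int n - int c) mod int n" using h by (simp add: zmod_int)
    also have "\<dots> = int x mod int n" by (simp add: mod_diff_left_eq)
    also have "\<dots> = int x" using x by simp
    finally show "(k - int c) mod int n = int x" .
  qed
  then show ?thesis by (simp add: delta_def)
qed

lemma rmul_empty: "rmul n {} q = {}" by (simp add: rmul_def)
lemma radd_empty: "radd p {} = p" by (simp add: radd_def)

context
  fixes m :: nat
  assumes m2: "2 \<le> m"
begin

abbreviation "nE \<equiv> NN m"
abbreviation "sE \<equiv> SS m"

definition uw where "uw = prog nE sE (nE - sE + 1) 1 m"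
definition vw where "vw = {1..m}"

lemma uw_sub: "uw \<subseteq> {0..<nE}" unfolding uw_def by (rule prog_sub[OF NN_pos[OF m2]])
lemma vw_sub: "vw \<subseteq> {0..<nE}" unfolding vw_def using m_lt[OF m2] by auto
lemma card_uw: "card uw = m" unfolding uw_def using prog_card[OF NN_pos[OF m2] cop[OF m2], of m] m_lt[OF m2] by simp
lemma card_vw: "card vw = m" unfolding vw_def by simp

lemma uw_elem:
  assumes "1 \<le> i" "i \<le> m"
  shows "(nE - sE + 1 + i * sE) mod nE = 1 + (i - 1) * sE"
proof -
  have sl: "sE < nE" by (rule SS_lt[OF m2])
  have "i * sE = sE + (i - 1) * sE" using assms by (cases i) auto
  then have "nE - sE + 1 + i * sE = nE + (1 + (i - 1) * sE)" using sl by simp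
  moreover have "1 + (i - 1) * sE < nE"
  proof -
    have "i - 1 \<le> m - 1" using assms by simp
    then have "(i - 1) * sE + m < nE" by (rule h1[OF m2])
    then show ?thesis using m2 by linarith
  qed
  ultimately have "(nE - sE + 1 + i * sE) mod nE = (nE + (1 + (i - 1) * sE)) mod nE"
    "1 + (i - 1) * sE < nE" by simp_all
  moreover have "(nE + (1 + (i - 1) * sE)) mod nE = (1 + (i - 1) * sE) mod nE" by (rule mod_add_self1)
  ultimately show ?thesis by simp
qed

lemma cyc_w: "cyc (int sE) (vec nE uw) (vec nE vw)"
  unfolding cyc_def
proof
  fix k
  have n0: "nE > 0" by (rule NN_pos[OF m2])
  have sl: "sE < nE" by (rule SS_lt[OF m2])
  have c0: "(nE - sE + 1 + (1 - 1) * sE) mod nE = nE - sE + 1"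
  proof -
    have "nE - sE + 1 < nE" using sl m2 by (simp add: SS_def)
    then show ?thesis by simp
  qed
  have cm: "(nE - sE + 1 + m * sE) mod nE = 1 + (m - 1) * sE" using uw_elem[of m] m2 by simp
  have p: "vec nE uw (k - int sE) + vec nE uw (k - int sE + int sE) =
      delta nE (int (nE - sE + 1)) (k - int sE) + delta nE (int (1 + (m - 1) * sE)) (k - int sE)"
    unfolding uw_def using prog_step[OF n0 cop[OF m2], of 1 m "nE - sE + 1" "k - int sE"] m2 m_lt[OF m2] c0 cm by simp
  have x1: "nE - sE + 1 < nE" using sl m2 by (simp add: SS_def)
  have x2: "1 + (m - 1) * sE < nE" using h1[OF m2, of "m - 1"] m2 by simp
  have d1: "delta nE (int (nE - sE + 1)) (k - int sE) = delta nE 1 k"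
  proof -
    have e: "nE - sE + 1 + sE = nE + 1" using sl by simp
    have "(nE + 1) mod nE = 1 mod nE" by (rule mod_add_self1)
    then have "(nE - sE + 1 + sE) mod nE = 1" unfolding e using m_lt[OF m2] by simp
    then show ?thesis using delta_shift[OF n0 x1, of k sE] by simp
  qed
  have d2: "delta nE (int (1 + (m - 1) * sE)) (k - int sE) = delta nE (int (m + 1)) k"
  proof -
    have "1 + (m - 1) * sE + sE = 1 + m * sE" using m2 by (cases m) auto
    then have "(1 + (m - 1) * sE + sE) mod nE = m + 1" using h5[OF m2] by simp
    then show ?thesis using delta_shift[OF n0 x2, of k sE] by simp
  qed
  have iv: "vec nE vw (k - 1) + vec nE vw (k - 1 + 1) = delta nE (int 1 - 1) (k - 1) + delta nE (int m) (k - 1)"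
    unfolding vw_def by (rule interval_step) (use m2 m_lt[OF m2] in auto)
  have d3: "delta nE (int 1 - 1) (k - 1) = delta nE 1 k"
    using delta_shift[OF n0, of 0 k 1] m_lt[OF m2] by simp
  have d4: "delta nE (int m) (k - 1) = delta nE (int (m + 1)) k"
    using delta_shift[OF n0, of m k 1] m_lt[OF m2] by simp
  have A: "vec nE uw (k - int sE) + vec nE uw k = delta nE 1 k + delta nE (int (m + 1)) k"
    using p unfolding d1 d2 by simp
  have B: "vec nE vw (k - 1) + vec nE vw k = delta nE 1 k + delta nE (int (m + 1)) k"
    using iv unfolding d3 d4 by simp
  show "vec nE uw k + vec nE uw (k - int sE) + vec nE vw k + vec nE vw (k - 1) = 0"
    using A B by (metis add.commute add.assoc bit_add_self)
qed

lemma pair_w: "pr nE (vec nE uw) (vec nE vw) (vec nE (a2 m)) (vec nE (b2 m)) = 1"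
proof -
  have ia: "uw \<inter> a2 m = {1}"
  proof (rule set_eqI)
    fix x
    show "x \<in> uw \<inter> a2 m \<longleftrightarrow> x \<in> {1}"
    proof
      assume h: "x \<in> uw \<inter> a2 m"
      then have "x \<in> prog nE sE (nE - sE + 1) 1 m" unfolding uw_def by blast
      then obtain i where i0: "i \<in> {1..m}" "x = (nE - sE + 1 + i * sE) mod nE"
        unfolding prog_def by blast
      have "x \<in> a2 m" using h by blast
      then have "x \<in> {1..m+1}" unfolding a2_def[OF m2] .
      then have x4: "x \<le> m + 1" by simp
      have i: "1 \<le> i" "i \<le> m" "x = (nE - sE + 1 + i * sE) mod nE" "x \<le> m + 1" using i0 x4 by auto
      have x: "x = 1 + (i - 1) * sE" using uw_elem[OF i(1,2)] i(3) by simp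
      show "x \<in> {1}"
      proof (cases "i = 1")
        case False
        then have "1 \<le> i - 1" using i by simp
        then have "sE \<le> (i - 1) * sE" by (rule s_le_is[OF m2])
        then show ?thesis using x i(4) by (simp add: SS_def)
      qed (use x in simp)
    next
      assume "x \<in> {1}"
      then have x: "x = 1" by simp
      have "1 \<in> uw" unfolding uw_def prog_def
        by (rule image_eqI[where x = 1]) (use uw_elem[of 1] m2 in auto)
      then show "x \<in> uw \<inter> a2 m" using x m2 by (simp add: a2_def[OF m2])
    qed
  qed
  have ib: "vw \<inter> b2 m = {}"
  proof -
    have "\<And>x. x \<in> vw \<Longrightarrow> x \<in> b2 m \<Longrightarrow> False"
    proof -
      fix x assume "x \<in> vw" "x \<in> b2 m"
      moreover have "x < sE" using \<open>x \<in> vw\<close> by (auto simp: vw_def SS_def)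
      ultimately show False using win2[OF m2, of x] by (auto simp: vw_def)
    qed
    then show ?thesis by blast
  qed
  have fu: "finite uw" by (rule finite_subset[OF uw_sub finite_atLeastLessThan])
  have fv: "finite vw" by (rule finite_subset[OF vw_sub finite_atLeastLessThan])
  have s1: "(\<Sum>k\<in>uw. vec nE (a2 m) (int k)) = 1"
  proof -
    have "(\<Sum>k\<in>uw. vec nE (a2 m) (int k)) = (\<Sum>k\<in>uw. of_bool (k \<in> a2 m))"
      by (rule sum.cong) (use uw_sub in \<open>auto simp: vec_nat\<close>)
    also have "\<dots> = of_nat (card (uw \<inter> {k. k \<in> a2 m}))" by (intro sum_of_bool_eq fu)
    also have "uw \<inter> {k. k \<in> a2 m} = {1}" using ia by auto
    finally show ?thesis by simp
  qed
  have s2: "(\<Sum>k\<in>vw. vec nE (b2 m) (int k)) = 0"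
  proof -
    have "(\<Sum>k\<in>vw. vec nE (b2 m) (int k)) = (\<Sum>k\<in>vw. of_bool (k \<in> b2 m))"
      by (rule sum.cong) (use vw_sub in \<open>auto simp: vec_nat\<close>)
    also have "\<dots> = of_nat (card (vw \<inter> {k. k \<in> b2 m}))" by (intro sum_of_bool_eq fv)
    also have "vw \<inter> {k. k \<in> b2 m} = {}" using ib by auto
    finally show ?thesis by simp
  qed
  have "pr nE (vec nE uw) (vec nE vw) (vec nE (a2 m)) (vec nE (b2 m)) =
      S nE (\<lambda>k. vec nE uw k * vec nE (a2 m) k) + S nE (\<lambda>k. vec nE vw k * vec nE (b2 m) k)"
    unfolding pr_def by (rule S_add)
  also have "\<dots> = (\<Sum>k\<in>uw. vec nE (a2 m) (int k)) + (\<Sum>k\<in>vw. vec nE (b2 m) (int k))"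
    by (simp only: S_vec_mult[OF uw_sub] S_vec_mult[OF vw_sub])
  finally show ?thesis unfolding s1 s2 by simp
qed

lemma w_C1: "(uw, vw) \<in> C1 nE (2 * m)"
  unfolding C1_iff[OF m2] using uw_sub vw_sub cyc_w by blast

lemma w_nC2: "(uw, vw) \<notin> C2 nE (2 * m)"
proof
  assume "(uw, vw) \<in> C2 nE (2 * m)"
  then obtain C where C: "per nE C" and UC: "\<And>k. vec nE uw k = C k + C (k - 1)"
      and VC: "\<And>k. vec nE vw k = C k + C (k - int sE)"
    using C2_to_fun[OF m2] by blast
  have "vec nE uw = (\<lambda>k. C k + C (k - 1))" "vec nE vw = (\<lambda>k. C k + C (k - int sE))"
    using UC VC by auto
  then have "pr nE (vec nE uw) (vec nE vw) (vec nE (a2 m)) (vec nE (b2 m)) = 0"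
    using L1[OF NN_pos[OF m2] C per_vec per_vec coc2[OF m2]] by simp
  then show False using pair_w by simp
qed

lemma witness_in: "2 * m \<in> eff_weights nE (2 * m)"
proof -
  have "radd uw (rmul nE {} (radd (rone nE) (xpow nE 1))) = uw" by (simp add: rmul_empty radd_empty)
  then have "wt {} + wt uw + wt vw \<in> eff_weights nE (2 * m)"
    unfolding eff_weights_def Rn_def using uw_sub vw_sub w_C1 w_nC2 by fastforce
  moreover have "wt {} + wt uw + wt vw = 2 * m" by (simp add: wt_def card_uw card_vw)
  ultimately show ?thesis by simp
qed

lemma lower: "x \<in> eff_weights nE (2 * m) \<Longrightarrow> 2 * m \<le> x"
proof -
  assume "x \<in> eff_weights nE (2 * m)"
  then obtain j u v where x: "x = wt j + wt u + wt v" and sub: "j \<subseteq> {0..<nE}" "u \<subseteq> {0..<nE}" "v \<subseteq> {0..<nE}"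
    and cs: "(radd u (rmul nE j (radd (rone nE) (xpow nE 1))), v) \<in> C1 nE (2 * m) - C2 nE (2 * m) \<or>
       (radd u (rmul nE j (radd (rone nE) (xinvpow nE (2 * m + 1)))), v) \<in> C1' nE (2 * m) - C2' nE (2 * m)"
    unfolding eff_weights_def Rn_def by blast
  from cs show ?thesis
  proof
    assume h: "(radd u (rmul nE j (radd (rone nE) (xpow nE 1))), v) \<in> C1 nE (2 * m) - C2 nE (2 * m)"
    show ?thesis unfolding x wt_def using X_bound[OF m2 sub] h by blast
  next
    assume h: "(radd u (rmul nE j (radd (rone nE) (xinvpow nE (2 * m + 1)))), v) \<in> C1' nE (2 * m) - C2' nE (2 * m)"
    show ?thesis unfolding x wt_def using Z_bound[OF m2 sub] h by blast
  qed
qed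

lemma fin: "finite (eff_weights nE (2 * m))"
proof (rule finite_subset)
  show "eff_weights nE (2 * m) \<subseteq> {..3 * nE}"
  proof
    fix x assume "x \<in> eff_weights nE (2 * m)"
    then obtain j u v where x: "x = wt j + wt u + wt v" and sub: "j \<subseteq> {0..<nE}" "u \<subseteq> {0..<nE}" "v \<subseteq> {0..<nE}"
      unfolding eff_weights_def Rn_def by blast
    have "card j \<le> nE" "card u \<le> nE" "card v \<le> nE"
      using card_mono[OF _ sub(1)] card_mono[OF _ sub(2)] card_mono[OF _ sub(3)] by auto
    then show "x \<in> {..3 * nE}" unfolding x wt_def by simp
  qed
qed simp

end

theorem theorem9:
  fixes d :: nat
  assumes "even d" and "d \<ge> 4"
  shows "eff_weights (d^2 div 2) d \<noteq> {} \<and> eff_dist (d^2 div 2) d = d"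
proof -
  obtain m where d: "d = 2 * m" using assms(1) by blast
  have m2: "2 \<le> m" using assms(2) d by simp
  have n: "(2 * m)^2 div 2 = NN m" unfolding NN_def by (simp add: power2_eq_square)
  have w: "2 * m \<in> eff_weights (NN m) (2 * m)" by (rule witness_in[OF m2])
  have "Min (eff_weights (NN m) (2 * m)) = 2 * m"
    by (rule Min_eqI[OF fin[OF m2] lower[OF m2] w])
  moreover have "eff_weights (NN m) (2 * m) \<noteq> {}" using w by blast
  ultimately show ?thesis unfolding d n eff_dist_def by blast
qed

end
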